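(* Let $D$ and $H$ be digraphs such that $H$ is equivalent to $D$ under source-sink identification. Then $\operatorname{dbw}(H)=\operatorname{dbw}(D)$.
   Context: All digraphs are finite and loopless, without parallel edges. A source is a vertex with no incoming edges, a sink a vertex with no outgoing edges. Two vertices $x\neq y$ are source/sink-identifiable if both are sources or both are sinks. Identifying them means replacing $x,y$ by a single new vertex $\gamma$ with in-neighbourhood $N^-(x)\cup N^-(y)$ and out-neighbourhood $N^+(x)\cup N^+(y)$. $H$ is equivalent to $D$ under source-sink identification if $H$ is obtained from $D$ by a finite sequence of identifications of source/sink-identifiable pairs. Directed branch-width: for $X\subseteq E(D)$, $S^V_X=\{y: \exists x,z,\ \vec{xy}\in E(D)\setminus X,\ \vec{yz}\in X\}$, $f_D(X)=|S^V_X\cup S^V_{E(D)\setminus X}|$; a directed branch decomposition is $(T,\beta)$ with $T$ a tree of maximum degree at most three and $\beta$ a bijection from the leaves of $T$ onto $E(D)$; the order of a tree edge is $f_D(\beta(Y))$ for $Y$ the leaves on one side; the width is the maximum order (0 if none), and $\operatorname{dbw}(D)$ is the minimum width. *)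

theory Defs
  imports Main
begin

text \<open>A digraph is a pair (V, E) with finite vertex set V and arc set E \<subseteq> V \<times> V,
  loopless; parallel arcs are excluded since E is a set.\<close>
type_synonym 'a digraph = "'a set \<times> ('a \<times> 'a) set"

definition digraph :: "'a digraph \<Rightarrow> bool" where
  "digraph D \<longleftrightarrow> finite (fst D) \<and> snd D \<subseteq> fst D \<times> fst D \<and> (\<forall>v. (v, v) \<notin> snd D)"

definition in_nbhd :: "'a digraph \<Rightarrow> 'a \<Rightarrow> 'a set" where
  "in_nbhd D v = {u. (u, v) \<in> snd D}"

definition out_nbhd :: "'a digraph \<Rightarrow> 'a \<Rightarrow> 'a set" where
  "out_nbhd D v = {w. (v, w) \<in> snd D}"

definition is_source :: "'a digraph \<Rightarrow> 'a \<Rightarrow> bool" where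
  "is_source D v \<longleftrightarrow> v \<in> fst D \<and> in_nbhd D v = {}"

definition is_sink :: "'a digraph \<Rightarrow> 'a \<Rightarrow> bool" where
  "is_sink D v \<longleftrightarrow> v \<in> fst D \<and> out_nbhd D v = {}"

definition ss_identifiable :: "'a digraph \<Rightarrow> 'a \<Rightarrow> 'a \<Rightarrow> bool" where
  "ss_identifiable D x y \<longleftrightarrow> x \<noteq> y \<and>
     ((is_source D x \<and> is_source D y) \<or> (is_sink D x \<and> is_sink D y))"

text \<open>Identify x and y into a new vertex g (g must not be a vertex of D other than x, y).\<close>
definition identify :: "'a digraph \<Rightarrow> 'a \<Rightarrow> 'a \<Rightarrow> 'a \<Rightarrow> 'a digraph" where
  "identify D x y g =
     (insert g (fst D - {x, y}),
      {(u, w). (u, w) \<in> snd D \<and> u \<notin> {x, y} \<and> w \<notin> {x, y}}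
      \<union> {(u, g) | u. u \<in> in_nbhd D x \<union> in_nbhd D y}
      \<union> {(g, w) | w. w \<in> out_nbhd D x \<union> out_nbhd D y})"

definition ss_step :: "'a digraph \<Rightarrow> 'a digraph \<Rightarrow> bool" where
  "ss_step D D' \<longleftrightarrow> (\<exists>x y g. ss_identifiable D x y \<and> g \<notin> fst D - {x, y}
                              \<and> D' = identify D x y g)"

definition ss_equiv :: "'a digraph \<Rightarrow> 'a digraph \<Rightarrow> bool" where
  "ss_equiv H D \<longleftrightarrow> ss_step\<^sup>*\<^sup>* D H"

definition SV :: "'a digraph \<Rightarrow> ('a \<times> 'a) set \<Rightarrow> 'a set" where
  "SV D X = {y. \<exists>x z. (x, y) \<in> snd D - X \<and> (y, z) \<in> X}"

definition fD :: "'a digraph \<Rightarrow> ('a \<times> 'a) set \<Rightarrow> nat" where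
  "fD D X = card (SV D X \<union> SV D (snd D - X))"

definition tadj :: "nat set set \<Rightarrow> (nat \<times> nat) set" where
  "tadj TE = {(u, v). {u, v} \<in> TE}"

definition is_tree :: "nat set \<Rightarrow> nat set set \<Rightarrow> bool" where
  "is_tree N TE \<longleftrightarrow> finite N \<and> N \<noteq> {} \<and>
     (\<forall>e\<in>TE. card e = 2 \<and> e \<subseteq> N) \<and>
     (\<forall>a\<in>N. \<forall>b\<in>N. (a, b) \<in> (tadj TE)\<^sup>*) \<and>
     card TE = card N - 1"

definition tdeg :: "nat set set \<Rightarrow> nat \<Rightarrow> nat" where
  "tdeg TE v = card {e\<in>TE. v \<in> e}"

definition tleaves :: "nat set \<Rightarrow> nat set set \<Rightarrow> nat set" where
  "tleaves N TE = {v\<in>N. tdeg TE v \<le> 1}"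

definition is_dbd :: "'a digraph \<Rightarrow> nat set \<Rightarrow> nat set set \<Rightarrow> (nat \<Rightarrow> 'a \<times> 'a) \<Rightarrow> bool" where
  "is_dbd D N TE \<beta> \<longleftrightarrow> is_tree N TE \<and> (\<forall>v\<in>N. tdeg TE v \<le> 3) \<and>
     bij_betw \<beta> (tleaves N TE) (snd D)"

definition side_leaves :: "nat set \<Rightarrow> nat set set \<Rightarrow> nat set \<Rightarrow> nat \<Rightarrow> nat set" where
  "side_leaves N TE e a = {v \<in> tleaves N TE. (a, v) \<in> (tadj (TE - {e}))\<^sup>*}"

definition tedge_order :: "'a digraph \<Rightarrow> nat set \<Rightarrow> nat set set \<Rightarrow> (nat \<Rightarrow> 'a \<times> 'a) \<Rightarrow> nat set \<Rightarrow> nat" where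
  "tedge_order D N TE \<beta> e = fD D (\<beta> ` side_leaves N TE e (SOME a. a \<in> e))"

definition dbd_width :: "'a digraph \<Rightarrow> nat set \<Rightarrow> nat set set \<Rightarrow> (nat \<Rightarrow> 'a \<times> 'a) \<Rightarrow> nat" where
  "dbd_width D N TE \<beta> = Max (insert 0 (tedge_order D N TE \<beta> ` TE))"

text \<open>If D has no arcs there is no decomposition; by convention dbw is then 0.\<close>
definition dbw :: "'a digraph \<Rightarrow> nat" where
  "dbw D = (if snd D = {} then 0
            else (LEAST k. \<exists>N TE \<beta>. is_dbd D N TE \<beta> \<and> dbd_width D N TE \<beta> = k))"

end

theory Submission
  imports Defs
begin

lemma tadj_conv: "(tadj G)\<inverse> = tadj G"
  by (auto simp: tadj_def insert_commute)

lemma rt_sym: "(u,v) \<in> (tadj G)\<^sup>* \<Longrightarrow> (v,u) \<in> (tadj G)\<^sup>*"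
  by (metis rtrancl_converseI tadj_conv)

lemma rt_mono: "G \<subseteq> G' \<Longrightarrow> (u,v) \<in> (tadj G)\<^sup>* \<Longrightarrow> (u,v) \<in> (tadj G')\<^sup>*"
proof -
  assume "G \<subseteq> G'" "(u,v) \<in> (tadj G)\<^sup>*"
  moreover have "tadj G \<subseteq> tadj G'" using \<open>G \<subseteq> G'\<close> by (auto simp: tadj_def)
  ultimately show ?thesis using rtrancl_mono by blast
qed

lemma rt_closed:
  assumes "(c,v) \<in> (tadj G)\<^sup>*" "c \<in> S" "\<And>u w. {u,w} \<in> G \<Longrightarrow> u \<in> S \<Longrightarrow> w \<in> S"
  shows "v \<in> S"
  using assms(1) by (induction rule: rtrancl_induct) (auto simp: tadj_def intro: assms(2,3))

lemma rt_isolated: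
  assumes "\<forall>e\<in>G. l \<notin> e" "(l,v) \<in> (tadj G)\<^sup>*" shows "v = l"
  using rt_closed[OF assms(2), of "{l}"] assms(1) by auto

lemma rt_isolated2:
  assumes "\<forall>e\<in>G. l \<notin> e" "(v,l) \<in> (tadj G)\<^sup>*" shows "v = l"
  using rt_isolated[OF assms(1) rt_sym[OF assms(2)]] .

lemma rt_pendant:
  assumes "\<forall>e\<in>G. l \<in> e \<longrightarrow> e = {p,l}" "p \<noteq> l" "c \<noteq> l" "(c,v) \<in> (tadj G)\<^sup>*"
  shows "(c,v) \<in> (tadj (G - {{p,l}}))\<^sup>* \<or> (v = l \<and> (c,p) \<in> (tadj (G - {{p,l}}))\<^sup>*)"
  using assms(4)
proof (induction rule: rtrancl_induct)
  case base
  then show ?case by simp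
next
  case (step v u)
  let ?G' = "G - {{p,l}}"
  have iso: "\<forall>e\<in>?G'. l \<notin> e" using assms(1) by auto
  from step have vu: "{v,u} \<in> G" by (simp add: tadj_def)
  show ?case
  proof (cases "{v,u} = {p,l}")
    case True
    then have "(v = p \<and> u = l) \<or> (v = l \<and> u = p)" using assms(2) by (auto simp: doubleton_eq_iff)
    then show ?thesis
    proof
      assume "v = p \<and> u = l"
      then show ?thesis using step.IH assms(2) by auto
    next
      assume h: "v = l \<and> u = p"
      then have "(c,p) \<in> (tadj ?G')\<^sup>*" using step.IH rt_isolated2[OF iso, of c] assms(3) by auto
      then show ?thesis using h by simp
    qed
  next
    case False
    have "l \<in> {v,u} \<longrightarrow> {v,u} = {p,l}" using assms(1) vu by (rule bspec)
    then have "l \<notin> {v,u}" using False by blast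
    have A: "{v,u} \<in> ?G'" using vu False by simp
    have B: "v \<noteq> l" using \<open>l \<notin> {v,u}\<close> by simp
    have C: "(c,v) \<in> (tadj ?G')\<^sup>*" using step.IH B by blast
    have D: "(v,u) \<in> tadj ?G'" using A by (simp add: tadj_def)
    show ?thesis using rtrancl_into_rtrancl[OF C D] by blast
  qed
qed

lemma deg1_unique:
  assumes "finite G" "tdeg G l \<le> 1" "{p,l} \<in> G"
  shows "\<forall>e\<in>G. l \<in> e \<longrightarrow> e = {p,l}"
proof -
  have f: "finite {e\<in>G. l \<in> e}" using assms(1) by simp
  have "card {e\<in>G. l \<in> e} \<le> Suc 0" using assms(2) by (simp add: tdeg_def)
  then have "\<forall>a1\<in>{e\<in>G. l \<in> e}. \<forall>a2\<in>{e\<in>G. l \<in> e}. a1 = a2" using card_le_Suc0_iff_eq[OF f] by blast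
  note * = this
  show ?thesis
  proof (intro ballI impI)
    fix e assume "e \<in> G" "l \<in> e"
    then have m1: "e \<in> {e\<in>G. l \<in> e}" by simp
    have m2: "{p,l} \<in> {e\<in>G. l \<in> e}" using assms(3) by simp
    show "e = {p,l}" using *[rule_format, OF m1 m2] .
  qed
qed

lemma tree_finite_edges: "is_tree N TE \<Longrightarrow> finite TE"
  unfolding is_tree_def by (meson PowI finite_Pow_iff rev_finite_subset subsetI)

lemma edge_card2:
  assumes "is_tree N TE" "{u,v} \<in> TE" shows "u \<noteq> v \<and> u \<in> N \<and> v \<in> N"
proof -
  have "card {u,v} = 2" "{u,v} \<subseteq> N" using assms unfolding is_tree_def by auto
  then show ?thesis by (cases "u = v") auto
qed


definition SVe :: "('a\<times>'a) set \<Rightarrow> ('a\<times>'a) set \<Rightarrow> 'a set" where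
  "SVe E X = {y. \<exists>x z. (x, y) \<in> E - X \<and> (y, z) \<in> X}"
definition fe :: "('a\<times>'a) set \<Rightarrow> ('a\<times>'a) set \<Rightarrow> nat" where
  "fe E X = card (SVe E X \<union> SVe E (E - X))"
lemma SVeI: "(x,y) \<in> E - X \<Longrightarrow> (y,z) \<in> X \<Longrightarrow> y \<in> SVe E X"
  unfolding SVe_def by (rule CollectI, rule exI, rule exI, rule conjI)

lemma SVeE: "y \<in> SVe E X \<Longrightarrow> (\<And>x z. (x,y) \<in> E - X \<Longrightarrow> (y,z) \<in> X \<Longrightarrow> P) \<Longrightarrow> P"
  unfolding SVe_def by auto

definition ordE where
  "ordE E N TE \<beta> e = fe E (\<beta> ` side_leaves N TE e (SOME a. a \<in> e))"
definition widE where
  "widE E N TE \<beta> = Max (insert 0 (ordE E N TE \<beta> ` TE))"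
definition decE where
  "decE E N TE \<beta> \<longleftrightarrow> is_tree N TE \<and> (\<forall>v\<in>N. tdeg TE v \<le> 3) \<and> bij_betw \<beta> (tleaves N TE) E"
definition dbwE where
  "dbwE E = (if E = {} then 0 else (LEAST k. \<exists>N TE \<beta>. decE E N TE \<beta> \<and> widE E N TE \<beta> = k))"

lemma dbw_eq: "dbw D = dbwE (snd D)"
  unfolding dbw_def dbwE_def is_dbd_def decE_def dbd_width_def widE_def tedge_order_def ordE_def
    fD_def fe_def SV_def SVe_def by simp

lemma fe_sym: "X \<subseteq> E \<Longrightarrow> fe E (E - X) = fe E X"
  by (simp add: fe_def double_diff Un_commute)

lemma SVe_Range: "SVe E X \<subseteq> Range E"
  by (auto elim!: SVeE)

lemma fe_mono_del:
  assumes "finite E" "X \<subseteq> E" shows "fe (E - {a}) (X - {a}) \<le> fe E X"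
proof -
  have "SVe (E - {a}) (X - {a}) \<subseteq> SVe E X"
  proof
    fix y assume "y \<in> SVe (E - {a}) (X - {a})"
    then obtain x z where "(x,y) \<in> E - {a} - (X - {a})" "(y,z) \<in> X - {a}" by (rule SVeE)
    then have "(x,y) \<in> E - X" "(y,z) \<in> X" by auto
    then show "y \<in> SVe E X" by (rule SVeI)
  qed
  moreover have "SVe (E - {a}) ((E - {a}) - (X - {a})) \<subseteq> SVe E (E - X)"
  proof
    fix y assume "y \<in> SVe (E - {a}) ((E - {a}) - (X - {a}))"
    then obtain x z where "(x,y) \<in> E - {a} - ((E - {a}) - (X - {a}))" "(y,z) \<in> (E - {a}) - (X - {a})" by (rule SVeE)
    then have "(x,y) \<in> E - (E - X)" "(y,z) \<in> E - X" by auto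
    then show "y \<in> SVe E (E - X)" by (rule SVeI)
  qed
  moreover have "finite (SVe E X \<union> SVe E (E - X))"
    using SVe_Range[of E] finite_Range[OF assms(1)] by (meson finite_Un rev_finite_subset)
  ultimately show ?thesis unfolding fe_def by (meson Un_mono card_mono)
qed

definition twin where
  "twin E a b \<longleftrightarrow> a \<noteq> b \<and> ((snd a = snd b \<and> fst a \<notin> Range E \<and> fst b \<notin> Range E)
                    \<or> (fst a = fst b \<and> snd a \<notin> Domain E \<and> snd b \<notin> Domain E))"

lemma twin_SVe:
  assumes tw: "twin E a b" and ab: "a \<in> E" "b \<in> E" and Y: "Y \<subseteq> E - {a}"
  shows "SVe E (if b \<in> Y then insert a Y else Y) \<subseteq> SVe (E - {a}) Y"
proof
  fix y
  let ?Y = "if b \<in> Y then insert a Y else Y"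
  assume "y \<in> SVe E ?Y"
  then obtain x z where xy: "(x,y) \<in> E - ?Y" and yz: "(y,z) \<in> ?Y" by (rule SVeE)
  obtain a1 a2 where a: "a = (a1,a2)" by (cases a)
  obtain b1 b2 where b: "b = (b1,b2)" by (cases b)
  have YE: "?Y \<subseteq> E" using Y ab by auto
  have i: "\<exists>x'. (x',y) \<in> (E - {a}) - Y"
  proof (cases "(x,y) = a")
    case True
    then have nb: "b \<notin> Y" using xy by auto
    from tw have "(a2 = b2 \<and> a1 \<notin> Range E) \<or> (a1 = b1 \<and> a2 \<notin> Domain E)" using a b by (auto simp: twin_def)
    then show ?thesis
    proof
      assume "a2 = b2 \<and> a1 \<notin> Range E"
      then have "(b1,y) \<in> (E - {a}) - Y" using True a b nb ab tw by (auto simp: twin_def)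
      then show ?thesis by blast
    next
      assume "a1 = b1 \<and> a2 \<notin> Domain E"
      then have "y \<notin> Domain E" using True a by auto
      moreover have "y \<in> Domain E" using yz YE by blast
      ultimately show ?thesis by blast
    qed
  next
    case False
    then show ?thesis using xy by (auto split: if_splits)
  qed
  have o: "\<exists>z'. (y,z') \<in> Y"
  proof (cases "(y,z) = a")
    case True
    then have nb: "b \<in> Y" using yz Y by (auto split: if_splits)
    from tw have "(a2 = b2 \<and> a1 \<notin> Range E) \<or> (a1 = b1 \<and> a2 \<notin> Domain E)" using a b by (auto simp: twin_def)
    then show ?thesis
    proof
      assume "a2 = b2 \<and> a1 \<notin> Range E"
      then have "y \<notin> Range E" using True a by auto
      moreover have "y \<in> Range E" using xy by blast
      ultimately show ?thesis by blast
    next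
      assume "a1 = b1 \<and> a2 \<notin> Domain E"
      then have "(y,b2) \<in> Y" using True a b nb by auto
      then show ?thesis by blast
    qed
  next
    case False
    then show ?thesis using yz by (auto split: if_splits)
  qed
  from i o obtain x' z' where "(x',y) \<in> (E - {a}) - Y" "(y,z') \<in> Y" by blast
  then show "y \<in> SVe (E - {a}) Y" by (rule SVeI)
qed

lemma fin_SVe: "finite E \<Longrightarrow> finite (SVe E X)"
  using SVe_Range[of E X] finite_Range by (meson rev_finite_subset)

lemma twin_fe1:
  assumes "finite E" "twin E a b" "a \<in> E" "b \<in> E" "X \<subseteq> E - {a}"
  shows "fe E (if b \<in> X then insert a X else X) \<le> fe (E - {a}) X"
proof -
  let ?X = "if b \<in> X then insert a X else X"
  let ?Z = "E - {a} - X"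
  have bE: "b \<in> E - {a}" using assms(2,4) by (auto simp: twin_def)
  have c: "E - ?X = (if b \<in> ?Z then insert a ?Z else ?Z)" using assms(3,5) bE by auto
  have "SVe E ?X \<subseteq> SVe (E - {a}) X" by (rule twin_SVe[OF assms(2-5)])
  moreover have "SVe E (E - ?X) \<subseteq> SVe (E - {a}) ?Z" unfolding c by (rule twin_SVe[OF assms(2-4)]) auto
  ultimately have "SVe E ?X \<union> SVe E (E - ?X) \<subseteq> SVe (E - {a}) X \<union> SVe (E - {a}) (E - {a} - X)" by blast
  then show ?thesis unfolding fe_def
    by (rule card_mono[rotated]) (use assms(1) fin_SVe in auto)
qed

lemma twin_fe2:
  assumes "finite E" "\<forall>v. (v,v) \<notin> E" "twin E a b" "a \<in> E" "b \<in> E" "c \<in> {a,b}"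
  shows "fe E {c} \<le> fe (E - {a}) {b}"
proof -
  obtain a1 a2 where a: "a = (a1,a2)" by (cases a)
  obtain b1 b2 where b: "b = (b1,b2)" by (cases b)
  obtain c1 c2 where c: "c = (c1,c2)" by (cases c)
  have cE: "c \<in> E" using assms(4-6) by auto
  have "b \<noteq> a" using assms(3) unfolding twin_def by blast
  have tw: "(a2 = b2 \<and> a1 \<notin> Range E \<and> b1 \<notin> Range E) \<or> (a1 = b1 \<and> a2 \<notin> Domain E \<and> b2 \<notin> Domain E)"
    using assms(3) a b by (auto simp: twin_def)
  have "SVe E {c} \<union> SVe E (E - {c}) \<subseteq> SVe (E - {a}) {b} \<union> SVe (E - {a}) (E - {a} - {b})"
  proof
    fix y assume "y \<in> SVe E {c} \<union> SVe E (E - {c})"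
    then show "y \<in> SVe (E - {a}) {b} \<union> SVe (E - {a}) (E - {a} - {b})"
    proof
      assume "y \<in> SVe E {c}"
      then obtain x z where x0: "(x,y) \<in> E - {c}" "(y,z) \<in> {c}" by (rule SVeE)
      then have "y = c1" using c by simp
      with x0 have x: "(x,y) \<in> E - {c}" "y = c1" by simp_all
      then have "c1 \<in> Range E" by blast
      have c1: "c1 = a1 \<or> c1 = b1" using assms(6) a b c by auto
      then have "\<not> (a1 \<notin> Range E \<and> b1 \<notin> Range E)" using \<open>c1 \<in> Range E\<close> by auto
      then have "a1 = b1" using tw by blast
      then have h: "c1 = b1" "a1 = b1" using c1 by auto
      have nl: "(y,y) \<notin> E" using assms(2) by blast
      have "(x,y) \<noteq> a"
      proof
        assume "(x,y) = a" then have "x = y" using a h x(2) by simp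
        then show False using x(1) nl by simp
      qed
      moreover have "(x,y) \<noteq> b"
      proof
        assume "(x,y) = b" then have "x = y" using b h x(2) by simp
        then show False using x(1) nl by simp
      qed
      ultimately have "(x,y) \<noteq> a" "(x,y) \<noteq> b" by simp_all
      then have "(x,b1) \<in> (E - {a}) - {b}" using x h by auto
      moreover have "(b1,b2) \<in> {b}" using b by simp
      ultimately have "b1 \<in> SVe (E - {a}) {b}" using b by (auto intro: SVeI)
      then show ?thesis using x h by simp
    next
      assume "y \<in> SVe E (E - {c})"
      then obtain x z where z0: "(x,y) \<in> E - (E - {c})" "(y,z) \<in> E - {c}" by (rule SVeE)
      then have "(x,y) = c" by simp
      then have "y = c2" using c by simp
      with z0 have z: "(y,z) \<in> E - {c}" "y = c2" by simp_all
      then have "c2 \<in> Domain E" by blast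
      have c2: "c2 = a2 \<or> c2 = b2" using assms(6) a b c by auto
      then have "\<not> (a2 \<notin> Domain E \<and> b2 \<notin> Domain E)" using \<open>c2 \<in> Domain E\<close> by auto
      then have "a2 = b2" using tw by blast
      then have h: "c2 = b2" "a2 = b2" using c2 by auto
      have nl: "(y,y) \<notin> E" using assms(2) by blast
      have "(y,z) \<noteq> a"
      proof
        assume "(y,z) = a" then have "z = y" using a h z(2) by simp
        then show False using z(1) nl by simp
      qed
      moreover have "(y,z) \<noteq> b"
      proof
        assume "(y,z) = b" then have "z = y" using b h z(2) by simp
        then show False using z(1) nl by simp
      qed
      ultimately have "(y,z) \<noteq> a" "(y,z) \<noteq> b" by simp_all
      then have "(b2,z) \<in> E - {a} - {b}" using z h by auto
      moreover have "(b1,b2) \<in> (E - {a}) - (E - {a} - {b})" using b assms(5) \<open>b \<noteq> a\<close> by simp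
      ultimately have "b2 \<in> SVe (E - {a}) (E - {a} - {b})" by (rule SVeI[rotated])
      then show ?thesis using z h by simp
    qed
  qed
  then show ?thesis unfolding fe_def
    by (rule card_mono[rotated]) (use assms(1) fin_SVe in auto)
qed


lemma least_eq:
  fixes P Q :: "nat \<Rightarrow> bool"
  assumes "\<And>k. P k \<Longrightarrow> \<exists>k'\<le>k. Q k'" "\<And>k. Q k \<Longrightarrow> \<exists>k'\<le>k. P k'"
  shows "Least P = Least Q"
proof (cases "\<exists>k. P k")
  case True
  then have p: "P (Least P)" by (rule LeastI_ex)
  then obtain k' where k': "k' \<le> Least P" "Q k'" using assms(1) by blast
  then have q1: "Least Q \<le> Least P" by (meson Least_le order_trans)
  have "Q (Least Q)" using k'(2) by (rule LeastI)
  then obtain k'' where "k'' \<le> Least Q" "P k''" using assms(2) by blast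
  then have "Least P \<le> Least Q" by (meson Least_le order_trans)
  with q1 show ?thesis by simp
next
  case False
  then have "\<not>(\<exists>k. Q k)" using assms(2) by blast
  with False have "P = Q" by (auto intro!: ext)
  then show ?thesis by simp
qed

lemma dbwE_transfer:
  assumes "E1 = {} \<longleftrightarrow> E2 = {}"
   "\<And>N TE \<beta>. decE E1 N TE \<beta> \<Longrightarrow> \<exists>N' TE' \<beta>'. decE E2 N' TE' \<beta>' \<and> widE E2 N' TE' \<beta>' \<le> widE E1 N TE \<beta>"
   "\<And>N TE \<beta>. decE E2 N TE \<beta> \<Longrightarrow> \<exists>N' TE' \<beta>'. decE E1 N' TE' \<beta>' \<and> widE E1 N' TE' \<beta>' \<le> widE E2 N TE \<beta>"
  shows "dbwE E1 = dbwE E2"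
proof (cases "E1 = {}")
  case True
  then show ?thesis using assms(1) by (simp add: dbwE_def)
next
  case False
  have "(LEAST k. \<exists>N TE \<beta>. decE E1 N TE \<beta> \<and> widE E1 N TE \<beta> = k)
      = (LEAST k. \<exists>N TE \<beta>. decE E2 N TE \<beta> \<and> widE E2 N TE \<beta> = k)"
  proof (rule least_eq)
    fix k assume "\<exists>N TE \<beta>. decE E1 N TE \<beta> \<and> widE E1 N TE \<beta> = k"
    then obtain N TE \<beta> where "decE E1 N TE \<beta>" "widE E1 N TE \<beta> = k" by blast
    then show "\<exists>k'\<le>k. \<exists>N TE \<beta>. decE E2 N TE \<beta> \<and> widE E2 N TE \<beta> = k'" using assms(2) by blast
  next
    fix k assume "\<exists>N TE \<beta>. decE E2 N TE \<beta> \<and> widE E2 N TE \<beta> = k"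
    then obtain N TE \<beta> where "decE E2 N TE \<beta>" "widE E2 N TE \<beta> = k" by blast
    then show "\<exists>k'\<le>k. \<exists>N TE \<beta>. decE E1 N TE \<beta> \<and> widE E1 N TE \<beta> = k'" using assms(3) by blast
  qed
  then show ?thesis using False assms(1) by (simp add: dbwE_def)
qed

lemma widE_le: "finite TE \<Longrightarrow> (\<And>e. e \<in> TE \<Longrightarrow> ordE E N TE \<beta> e \<le> k) \<Longrightarrow> widE E N TE \<beta> \<le> k"
  unfolding widE_def by (auto intro!: Max.boundedI)

lemma ord_le_widE: "finite TE \<Longrightarrow> e \<in> TE \<Longrightarrow> ordE E N TE \<beta> e \<le> widE E N TE \<beta>"
  unfolding widE_def by (auto intro!: Max_ge)

lemma decE_finite: "decE E N TE \<beta> \<Longrightarrow> finite TE"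
  unfolding decE_def using tree_finite_edges by blast

lemma side_sub: "side_leaves N TE e c \<subseteq> tleaves N TE"
  unfolding side_leaves_def by blast

lemma rename_SVe:
  fixes \<phi> :: "'a \<Rightarrow> 'b"
  assumes inj: "inj_on (map_prod \<phi> \<phi>) F"
    and C: "\<And>v0 v1. v0 \<in> Range F \<Longrightarrow> v1 \<in> Domain F \<Longrightarrow> \<phi> v0 = \<phi> v1 \<Longrightarrow> v0 = v1"
    and Y: "Y \<subseteq> F"
  shows "SVe (map_prod \<phi> \<phi> ` F) (map_prod \<phi> \<phi> ` Y) = \<phi> ` SVe F Y"
proof -
  let ?\<psi> = "map_prod \<phi> \<phi>"
  have d: "?\<psi> ` F - ?\<psi> ` Y = ?\<psi> ` (F - Y)" using inj Y by (simp add: inj_on_image_set_diff)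
  show ?thesis
  proof
    show "SVe (?\<psi> ` F) (?\<psi> ` Y) \<subseteq> \<phi> ` SVe F Y"
    proof
      fix y assume "y \<in> SVe (?\<psi> ` F) (?\<psi> ` Y)"
      then have "\<exists>x z. (x,y) \<in> ?\<psi> ` (F - Y) \<and> (y,z) \<in> ?\<psi> ` Y" by (simp add: SVe_def d)
      then obtain x0 v0 v1 z1 where h: "(x0,v0) \<in> F - Y" "\<phi> v0 = y" "(v1,z1) \<in> Y" "\<phi> v1 = y" by auto
      have r: "v0 \<in> Range F" using h(1) by blast
      have dm: "v1 \<in> Domain F" using h(3) Y by blast
      have "v0 = v1" using C[OF r dm] h(2,4) by simp
      then have "v0 \<in> SVe F Y" using h by (auto intro: SVeI)
      then show "y \<in> \<phi> ` SVe F Y" using h by blast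
    qed
  next
    show "\<phi> ` SVe F Y \<subseteq> SVe (?\<psi> ` F) (?\<psi> ` Y)"
    proof
      fix y assume "y \<in> \<phi> ` SVe F Y"
      then obtain v where v: "v \<in> SVe F Y" "y = \<phi> v" by blast
      from v(1) obtain x z where h: "(x,v) \<in> F - Y" "(v,z) \<in> Y" by (rule SVeE)
      have "?\<psi> (x,v) \<in> ?\<psi> ` (F - Y)" "?\<psi> (v,z) \<in> ?\<psi> ` Y" using h by (blast intro: imageI)+
      then have "(\<phi> x, y) \<in> ?\<psi> ` (F - Y)" "(y, \<phi> z) \<in> ?\<psi> ` Y" using v(2) by simp_all
      then show "y \<in> SVe (?\<psi> ` F) (?\<psi> ` Y)" unfolding SVe_def d
        by (intro CollectI exI conjI)
    qed
  qed
qed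

lemma rename_fe:
  fixes \<phi> :: "'a \<Rightarrow> 'b"
  assumes inj: "inj_on (map_prod \<phi> \<phi>) F"
    and C: "\<And>v0 v1. v0 \<in> Range F \<Longrightarrow> v1 \<in> Domain F \<Longrightarrow> \<phi> v0 = \<phi> v1 \<Longrightarrow> v0 = v1"
    and X: "X \<subseteq> F"
  shows "fe (map_prod \<phi> \<phi> ` F) (map_prod \<phi> \<phi> ` X) = fe F X"
proof -
  let ?\<psi> = "map_prod \<phi> \<phi>"
  have d: "?\<psi> ` F - ?\<psi> ` X = ?\<psi> ` (F - X)" using inj X by (simp add: inj_on_image_set_diff)
  have sub: "SVe F X \<union> SVe F (F - X) \<subseteq> Range F \<inter> Domain F" using X by (auto elim!: SVeE)
  have ij: "inj_on \<phi> (SVe F X \<union> SVe F (F - X))"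
  proof (rule inj_onI)
    fix u w assume "u \<in> SVe F X \<union> SVe F (F - X)" "w \<in> SVe F X \<union> SVe F (F - X)" "\<phi> u = \<phi> w"
    moreover have "u \<in> Range F" "w \<in> Domain F" using sub calculation(1,2) by blast+
    ultimately show "u = w" using C by blast
  qed
  have e1: "SVe (?\<psi> ` F) (?\<psi> ` X) = \<phi> ` SVe F X" by (rule rename_SVe[OF inj C X])
  have e2: "SVe (?\<psi> ` F) (?\<psi> ` (F - X)) = \<phi> ` SVe F (F - X)" by (rule rename_SVe[OF inj C Diff_subset])
  have "fe (?\<psi> ` F) (?\<psi> ` X) = card (\<phi> ` SVe F X \<union> \<phi> ` SVe F (F - X))"
    unfolding fe_def d e1 e2 by simp
  also have "\<dots> = card (SVe F X \<union> SVe F (F - X))"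
    using card_image[OF ij] by (simp add: image_Un)
  finally show ?thesis unfolding fe_def .
qed

lemma rename_dbw:
  fixes \<phi> :: "'a \<Rightarrow> 'b"
  assumes inj: "inj_on (map_prod \<phi> \<phi>) F"
    and C: "\<And>v0 v1. v0 \<in> Range F \<Longrightarrow> v1 \<in> Domain F \<Longrightarrow> \<phi> v0 = \<phi> v1 \<Longrightarrow> v0 = v1"
  shows "dbwE (map_prod \<phi> \<phi> ` F) = dbwE F"
proof (rule dbwE_transfer)
  let ?\<psi> = "map_prod \<phi> \<phi>"
  have bij: "bij_betw ?\<psi> F (?\<psi> ` F)" using inj by (simp add: inj_on_imp_bij_betw)
  show "(?\<psi> ` F = {}) = (F = {})" by simp
  fix N TE \<beta>
  {
    assume d: "decE (?\<psi> ` F) N TE \<beta>"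
    let ?\<beta> = "inv_into F ?\<psi> \<circ> \<beta>"
    have b0: "bij_betw \<beta> (tleaves N TE) (?\<psi> ` F)" using d by (simp add: decE_def)
    have b1: "bij_betw ?\<beta> (tleaves N TE) F"
      by (rule bij_betw_trans[OF b0 bij_betw_inv_into[OF bij]])
    have d': "decE F N TE ?\<beta>" using d b1 by (simp add: decE_def)
    have im: "\<beta> ` tleaves N TE = ?\<psi> ` F" using b0 by (simp add: bij_betw_def)
    have "ordE F N TE ?\<beta> e = ordE (?\<psi> ` F) N TE \<beta> e" for e
    proof -
      let ?S = "side_leaves N TE e (SOME a. a \<in> e)"
      have bs: "\<beta> ` ?S \<subseteq> ?\<psi> ` F" using image_mono[OF side_sub] im by metis
      have X: "?\<beta> ` ?S \<subseteq> F"
      proof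
        fix u assume "u \<in> ?\<beta> ` ?S"
        then obtain x where x: "x \<in> ?S" "u = inv_into F ?\<psi> (\<beta> x)" by auto
        have "\<beta> x \<in> ?\<psi> ` F" using x(1) by (rule subsetD[OF bs imageI])
        then show "u \<in> F" unfolding x(2) by (rule inv_into_into)
      qed
      have "?\<psi> ` (?\<beta> ` ?S) = (\<lambda>x. ?\<psi> (inv_into F ?\<psi> (\<beta> x))) ` ?S" by (simp add: image_comp)
      also have "\<dots> = \<beta> ` ?S"
      proof (rule image_cong[OF refl])
        fix x assume "x \<in> ?S"
        then have "\<beta> x \<in> ?\<psi> ` F" by (rule subsetD[OF bs imageI])
        then show "?\<psi> (inv_into F ?\<psi> (\<beta> x)) = \<beta> x" by (rule f_inv_into_f)
      qed
      finally have eq: "?\<psi> ` (?\<beta> ` ?S) = \<beta> ` ?S" .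
      have r: "fe (?\<psi> ` F) (?\<psi> ` (?\<beta> ` ?S)) = fe F (?\<beta> ` ?S)" by (rule rename_fe[OF inj C X])
      show ?thesis unfolding ordE_def using r[unfolded eq, symmetric] .
    qed
    then have "widE F N TE ?\<beta> = widE (?\<psi> ` F) N TE \<beta>" unfolding widE_def by simp
    then show "\<exists>N' TE' \<beta>'. decE F N' TE' \<beta>' \<and> widE F N' TE' \<beta>' \<le> widE (?\<psi> ` F) N TE \<beta>"
      using d' by (intro exI[of _ N] exI[of _ TE] exI[of _ ?\<beta>]) simp
  }
  {
    assume d: "decE F N TE \<beta>"
    let ?\<beta> = "?\<psi> \<circ> \<beta>"
    have b0: "bij_betw \<beta> (tleaves N TE) F" using d by (simp add: decE_def)
    have b1: "bij_betw ?\<beta> (tleaves N TE) (?\<psi> ` F)" by (rule bij_betw_trans[OF b0 bij])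
    have d': "decE (?\<psi> ` F) N TE ?\<beta>" using d b1 by (simp add: decE_def)
    have im: "\<beta> ` tleaves N TE = F" using b0 by (simp add: bij_betw_def)
    have "ordE (?\<psi> ` F) N TE ?\<beta> e = ordE F N TE \<beta> e" for e
    proof -
      let ?S = "side_leaves N TE e (SOME a. a \<in> e)"
      have X: "\<beta> ` ?S \<subseteq> F" using image_mono[OF side_sub] im by metis
      have eq: "?\<beta> ` ?S = ?\<psi> ` (\<beta> ` ?S)" by (rule image_comp[symmetric])
      show ?thesis unfolding ordE_def eq by (rule rename_fe[OF inj C X])
    qed
    then have "widE (?\<psi> ` F) N TE ?\<beta> = widE F N TE \<beta>" unfolding widE_def by simp
    then show "\<exists>N' TE' \<beta>'. decE (?\<psi> ` F) N' TE' \<beta>' \<and> widE (?\<psi> ` F) N' TE' \<beta>' \<le> widE F N TE \<beta>"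
      using d' by (intro exI[of _ N] exI[of _ TE] exI[of _ ?\<beta>]) simp
  }
qed

lemma uniqD: "\<forall>e\<in>TE. l \<in> e \<longrightarrow> e = {p,l} \<Longrightarrow> x \<in> TE \<Longrightarrow> l \<in> x \<Longrightarrow> x = {p,l}"
proof -
  assume a: "\<forall>e\<in>TE. l \<in> e \<longrightarrow> e = {p,l}" "x \<in> TE" "l \<in> x"
  from a(1,2) have "l \<in> x \<longrightarrow> x = {p,l}" by (rule bspec)
  with a(3) show ?thesis by (rule mp[rotated])
qed

lemma bij_img_diff:
  assumes "bij_betw f A B" "C \<subseteq> A" shows "f ` (A - C) = B - f ` C"
proof -
  have i: "inj_on f A" and im: "f ` A = B" using assms(1) unfolding bij_betw_def by simp_all
  have "f ` (A - C) = f ` A - f ` C" by (rule inj_on_image_set_diff[OF i]) (use assms(2) in auto)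
  then show ?thesis using im by simp
qed

lemma edges_at_l:
  assumes e: "{p,l} \<in> TE" and u: "\<forall>e\<in>TE. l \<in> e \<longrightarrow> e = {p,l}"
  shows "{e\<in>TE. l \<in> e} = {{p,l}}"
proof (rule equalityI)
  show "{e\<in>TE. l \<in> e} \<subseteq> {{p,l}}"
  proof
    fix x assume "x \<in> {e\<in>TE. l \<in> e}"
    then have "x \<in> TE" "l \<in> x" by simp_all
    then have "x = {p,l}" by (rule uniqD[OF u])
    then show "x \<in> {{p,l}}" by simp
  qed
  show "{{p,l}} \<subseteq> {e\<in>TE. l \<in> e}" using e by simp
qed

lemma leaf_tdeg1:
  assumes T: "is_tree N TE" and e: "{p,l} \<in> TE" and u: "\<forall>e\<in>TE. l \<in> e \<longrightarrow> e = {p,l}"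
  shows "tdeg TE l = 1" "l \<in> tleaves N TE"
proof -
  have "{e\<in>TE. l \<in> e} = {{p,l}}" by (rule edges_at_l[OF e u])
  then show "tdeg TE l = 1" unfolding tdeg_def by simp
  moreover have "l \<in> N" using edge_card2[OF T e] by simp
  ultimately show "l \<in> tleaves N TE" unfolding tleaves_def by simp
qed

lemma tree_conn: "is_tree N TE \<Longrightarrow> a \<in> N \<Longrightarrow> b \<in> N \<Longrightarrow> (a,b) \<in> (tadj TE)\<^sup>*"
  unfolding is_tree_def by blast

lemma pendant_sides:
  assumes T: "is_tree N TE" and e: "{p,l} \<in> TE" and u: "\<forall>e\<in>TE. l \<in> e \<longrightarrow> e = {p,l}"
  shows "side_leaves N TE {p,l} l = {l}" "side_leaves N TE {p,l} p = tleaves N TE - {l}"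
proof -
  have pl: "p \<noteq> l" "p \<in> N" "l \<in> N" using edge_card2[OF T e] by auto
  have iso: "\<forall>e\<in>TE - {{p,l}}. l \<notin> e" using u by auto
  have lf: "l \<in> tleaves N TE" using leaf_tdeg1[OF T e u] by simp
  show "side_leaves N TE {p,l} l = {l}"
    using rt_isolated[OF iso] lf unfolding side_leaves_def by auto
  show "side_leaves N TE {p,l} p = tleaves N TE - {l}"
  proof
    show "side_leaves N TE {p,l} p \<subseteq> tleaves N TE - {l}"
      using rt_isolated2[OF iso, of p] pl unfolding side_leaves_def by auto
  next
    show "tleaves N TE - {l} \<subseteq> side_leaves N TE {p,l} p"
    proof
      fix v assume v: "v \<in> tleaves N TE - {l}"
      then have "v \<in> N" unfolding tleaves_def by auto
      then have "(p,v) \<in> (tadj TE)\<^sup>*" using tree_conn[OF T pl(2)] by blast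
      then have "(p,v) \<in> (tadj (TE - {{p,l}}))\<^sup>*" using rt_pendant[OF u pl(1) pl(1)] v by blast
      then show "v \<in> side_leaves N TE {p,l} p" using v unfolding side_leaves_def by blast
    qed
  qed
qed

lemma pendant_ord:
  assumes D: "decE E N TE \<beta>" and e: "{p,l} \<in> TE" and u: "\<forall>e\<in>TE. l \<in> e \<longrightarrow> e = {p,l}"
  shows "ordE E N TE \<beta> {p,l} = fe E {\<beta> l}"
proof -
  have T: "is_tree N TE" and bij: "bij_betw \<beta> (tleaves N TE) E" using D unfolding decE_def by auto
  have lf: "l \<in> tleaves N TE" using leaf_tdeg1[OF T e u] by simp
  have bl: "{\<beta> l} \<subseteq> E" using bij_betw_apply[OF bij lf] by simp
  have "(SOME a. a \<in> {p,l}) \<in> {p,l}" by (rule someI[of _ p]) simp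
  then show ?thesis
  proof
    assume s: "(SOME a. a \<in> {p,l}) = p"
    have "\<beta> ` (tleaves N TE - {l}) = E - {\<beta> l}"
      using bij_img_diff[OF bij, of "{l}"] lf by simp
    then show ?thesis unfolding ordE_def s pendant_sides(2)[OF T e u] by (simp only: fe_sym[OF bl])
  next
    assume "(SOME a. a \<in> {p,l}) \<in> {l}"
    then have s: "(SOME a. a \<in> {p,l}) = l" by simp
    show ?thesis unfolding ordE_def s pendant_sides(1)[OF T e u] by (simp only: image_insert image_empty)
  qed
qed

lemma leaf_edge:
  assumes T: "is_tree N TE" and l: "l \<in> tleaves N TE" and v: "v \<in> N" "v \<noteq> l"
  shows "\<exists>p. {p,l} \<in> TE \<and> (\<forall>e\<in>TE. l \<in> e \<longrightarrow> e = {p,l})"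
proof -
  have lN: "l \<in> N" using l unfolding tleaves_def by simp
  have "(l,v) \<in> (tadj TE)\<^sup>*" using tree_conn[OF T lN v(1)] .
  then obtain w where "(l,w) \<in> tadj TE" using v(2) by (cases rule: converse_rtranclE) auto
  then have e: "{w,l} \<in> TE" unfolding tadj_def by (simp add: insert_commute)
  have "tdeg TE l \<le> 1" using l unfolding tleaves_def by simp
  then show ?thesis using deg1_unique[OF tree_finite_edges[OF T] _ e] e by blast
qed


lemma no_l_edges: assumes u: "\<forall>e\<in>TE. l \<in> e \<longrightarrow> e = {p,l}" shows "\<forall>e\<in>TE - {{p,l}}. l \<notin> e"
proof (intro ballI)
  fix x assume x: "x \<in> TE - {{p,l}}"
  then have xT: "x \<in> TE" and xn: "x \<noteq> {p,l}" by simp_all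
  show "l \<notin> x"
  proof
    assume "l \<in> x"
    then have "x = {p,l}" by (rule uniqD[OF u xT])
    with xn show False by simp
  qed
qed

lemma diff2_comm: "A - {x} - {y} = A - {y} - {x}"
  by blast

lemma diff2_sub: "A - {x} - {y} \<subseteq> A - {y}"
  by blast

lemma Ball_sub: "\<forall>e\<in>A. P e \<Longrightarrow> B \<subseteq> A \<Longrightarrow> \<forall>e\<in>B. P e"
  by blast

lemma notin_edge: "\<forall>e\<in>G. l \<notin> e \<Longrightarrow> f \<in> G \<Longrightarrow> c \<in> f \<Longrightarrow> c \<noteq> l"
  by blast

lemma del_struct:
  assumes T: "is_tree N TE" and e: "{p,l} \<in> TE" and u: "\<forall>e\<in>TE. l \<in> e \<longrightarrow> e = {p,l}"
  shows "is_tree (N - {l}) (TE - {{p,l}})"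
   and "\<And>v. v \<noteq> p \<Longrightarrow> v \<noteq> l \<Longrightarrow> tdeg (TE - {{p,l}}) v = tdeg TE v"
   and "tdeg (TE - {{p,l}}) p = tdeg TE p - 1"
   and "\<And>f c v. f \<in> TE - {{p,l}} \<Longrightarrow> c \<in> f \<Longrightarrow> v \<noteq> l \<Longrightarrow>
          (c,v) \<in> (tadj (TE - {{p,l}} - {f}))\<^sup>* \<longleftrightarrow> (c,v) \<in> (tadj (TE - {f}))\<^sup>*"
   and "\<And>f c. f \<in> TE - {{p,l}} \<Longrightarrow> c \<in> f \<Longrightarrow>
          (c,l) \<in> (tadj (TE - {f}))\<^sup>* \<longleftrightarrow> (c,p) \<in> (tadj (TE - {{p,l}} - {f}))\<^sup>*"
proof -
  have pl: "p \<noteq> l" "p \<in> N" "l \<in> N" using edge_card2[OF T e] by auto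
  have fin: "finite TE" by (rule tree_finite_edges[OF T])
  have iso: "\<forall>e\<in>TE - {{p,l}}. l \<notin> e" by (rule no_l_edges[OF u])
  show "is_tree (N - {l}) (TE - {{p,l}})"
    unfolding is_tree_def
  proof (intro conjI ballI)
    show "finite (N - {l})" using T unfolding is_tree_def by simp
    show "N - {l} \<noteq> {}" using pl by blast
  next
    fix f assume f: "f \<in> TE - {{p,l}}"
    then show "card f = 2" using T unfolding is_tree_def by simp
    have "f \<subseteq> N" using f T unfolding is_tree_def by simp
    moreover have "l \<notin> f" using bspec[OF iso f] .
    ultimately show "f \<subseteq> N - {l}" by blast
  next
    fix x y assume x: "x \<in> N - {l}" and y: "y \<in> N - {l}"
    then have "(x,y) \<in> (tadj TE)\<^sup>*" using tree_conn[OF T] by simp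
    then show "(x,y) \<in> (tadj (TE - {{p,l}}))\<^sup>*" using rt_pendant[OF u pl(1), of x y] x y by blast
  next
    have "card (TE - {{p,l}}) = card TE - 1" using fin e by simp
    moreover have "card (N - {l}) = card N - 1" using pl by simp
    moreover have "card TE = card N - 1" using T unfolding is_tree_def by simp
    ultimately show "card (TE - {{p,l}}) = card (N - {l}) - 1" by simp
  qed
  have deq: "{f \<in> TE - {{p,l}}. v \<in> f} = {f \<in> TE. v \<in> f} - {{p,l}}" for v by (rule set_eqI) (simp only: mem_Collect_eq Diff_iff singleton_iff, blast)
  show "tdeg (TE - {{p,l}}) v = tdeg TE v" if "v \<noteq> p" "v \<noteq> l" for v
  proof -
    have "{p,l} \<notin> {f \<in> TE. v \<in> f}" using that by simp
    then show ?thesis unfolding tdeg_def deq by simp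
  qed
  show "tdeg (TE - {{p,l}}) p = tdeg TE p - 1"
    unfolding tdeg_def deq using fin e by simp
  show "(c,v) \<in> (tadj (TE - {{p,l}} - {f}))\<^sup>* \<longleftrightarrow> (c,v) \<in> (tadj (TE - {f}))\<^sup>*"
    if f: "f \<in> TE - {{p,l}}" and c: "c \<in> f" and v: "v \<noteq> l" for f c v
  proof
    show "(c,v) \<in> (tadj (TE - {{p,l}} - {f}))\<^sup>* \<Longrightarrow> (c,v) \<in> (tadj (TE - {f}))\<^sup>*"
      by (rule rt_mono[OF diff2_sub])
  next
    assume r: "(c,v) \<in> (tadj (TE - {f}))\<^sup>*"
    have uG: "\<forall>e\<in>TE - {f}. l \<in> e \<longrightarrow> e = {p,l}" by (rule Ball_sub[OF u Diff_subset])
    have cl: "c \<noteq> l" by (rule notin_edge[OF iso f c])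
    have eq: "TE - {f} - {{p,l}} = TE - {{p,l}} - {f}" by (rule diff2_comm)
    show "(c,v) \<in> (tadj (TE - {{p,l}} - {f}))\<^sup>*" using rt_pendant[OF uG pl(1) cl r] v unfolding eq by blast
  qed
  show "(c,l) \<in> (tadj (TE - {f}))\<^sup>* \<longleftrightarrow> (c,p) \<in> (tadj (TE - {{p,l}} - {f}))\<^sup>*"
    if f: "f \<in> TE - {{p,l}}" and c: "c \<in> f" for f c
  proof
    assume r: "(c,l) \<in> (tadj (TE - {f}))\<^sup>*"
    have uG: "\<forall>e\<in>TE - {f}. l \<in> e \<longrightarrow> e = {p,l}" by (rule Ball_sub[OF u Diff_subset])
    have cl: "c \<noteq> l" by (rule notin_edge[OF iso f c])
    have eq: "TE - {f} - {{p,l}} = TE - {{p,l}} - {f}" by (rule diff2_comm)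
    have iso2: "\<forall>e\<in>TE - {{p,l}} - {f}. l \<notin> e" by (rule Ball_sub[OF iso Diff_subset])
    have "(c,l) \<notin> (tadj (TE - {{p,l}} - {f}))\<^sup>*" using rt_isolated2[OF iso2, of c] cl by blast
    then show "(c,p) \<in> (tadj (TE - {{p,l}} - {f}))\<^sup>*" using rt_pendant[OF uG pl(1) cl r] unfolding eq by blast
  next
    assume r: "(c,p) \<in> (tadj (TE - {{p,l}} - {f}))\<^sup>*"
    have "(c,p) \<in> (tadj (TE - {f}))\<^sup>*" by (rule rt_mono[OF diff2_sub r])
    moreover have "(p,l) \<in> tadj (TE - {f})" using e f unfolding tadj_def by auto
    ultimately show "(c,l) \<in> (tadj (TE - {f}))\<^sup>*" by (rule rtrancl_into_rtrancl)
  qed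
qed


lemma single_tree: "is_tree {0} {}"
  unfolding is_tree_def by simp

lemma single_dec: "decE {x} {0} {} (\<lambda>_. x)"
proof -
  have "tleaves {0} {} = {0}" unfolding tleaves_def tdeg_def by simp
  then show ?thesis unfolding decE_def using single_tree by (simp add: tdeg_def bij_betw_def)
qed

lemma single_wid: "widE E N {} \<beta> = 0"
  unfolding widE_def by simp

lemma bij_upd:
  assumes "bij_betw f A B" "x \<notin> A" "y \<notin> B"
  shows "bij_betw (f(x := y)) (insert x A) (insert y B)"
proof -
  have "bij_betw (f(x := y)) A B" using assms(1) by (rule bij_betw_cong[THEN iffD1, rotated]) (use assms(2) in auto)
  then show ?thesis using assms(2,3) by (simp add: bij_betw_def inj_on_insert)
qed

lemma bij_diff1:
  assumes "bij_betw f A B" "x \<in> A" shows "bij_betw f (A - {x}) (B - {f x})"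
proof -
  have "inj_on f (A - {x})" using assms(1) unfolding bij_betw_def by (meson Diff_subset inj_on_subset)
  moreover have "f ` (A - {x}) = B - {f x}" using bij_img_diff[OF assms(1), of "{x}"] assms(2) by simp
  ultimately show ?thesis unfolding bij_betw_def by simp
qed

lemma some_in: "(SOME a. a \<in> f) \<in> f" if "f \<in> TE" "is_tree N TE"
proof -
  have "card f = 2" using that unfolding is_tree_def by simp
  then obtain x where "x \<in> f" by (metis card.empty ex_in_conv zero_neq_numeral)
  then show ?thesis by (rule someI)
qed

lemma tdeg_pos: "finite TE \<Longrightarrow> {p,l} \<in> TE \<Longrightarrow> tdeg TE p \<ge> 1"
proof -
  assume "finite TE" "{p,l} \<in> TE"
  then have "finite {e\<in>TE. p \<in> e}" "{p,l} \<in> {e\<in>TE. p \<in> e}" by simp_all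
  then have "card {e\<in>TE. p \<in> e} > 0" using card_gt_0_iff by blast
  then show ?thesis unfolding tdeg_def by simp
qed

lemma delete_leaf:
  assumes "decE E N TE \<beta>" "a \<in> E" "E - {a} \<noteq> {}"
  shows "\<exists>N' TE' \<beta>'. decE (E - {a}) N' TE' \<beta>' \<and> widE (E - {a}) N' TE' \<beta>' \<le> widE E N TE \<beta>"
  using assms
proof (induction "card N" arbitrary: N TE \<beta> rule: less_induct)
  case less
  have T: "is_tree N TE" and deg: "\<forall>v\<in>N. tdeg TE v \<le> 3" and bij: "bij_betw \<beta> (tleaves N TE) E"
    using less.prems(1) unfolding decE_def by auto
  let ?L = "tleaves N TE"
  have fin: "finite TE" by (rule tree_finite_edges[OF T])
  have finN: "finite N" using T unfolding is_tree_def by simp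
  have LN: "?L \<subseteq> N" unfolding tleaves_def by blast
  have finE: "finite E" using bij finN LN by (metis bij_betw_finite finite_subset)
  have aim: "a \<in> \<beta> ` ?L" using bij less.prems(2) unfolding bij_betw_def by simp
  define l where "l = inv_into ?L \<beta> a"
  have lL: "l \<in> ?L" unfolding l_def by (rule inv_into_into[OF aim])
  have bl: "\<beta> l = a" unfolding l_def by (rule f_inv_into_f[OF aim])
  obtain b where b: "b \<in> E - {a}" using less.prems(3) by blast
  then have "b \<in> \<beta> ` ?L" using bij unfolding bij_betw_def by simp
  then obtain l' where l': "l' \<in> ?L" "\<beta> l' = b" by blast
  have l'l: "l' \<noteq> l" using l' bl b by auto
  have l'N: "l' \<in> N" using l' LN by blast
  obtain p where e: "{p,l} \<in> TE" and u: "\<forall>e\<in>TE. l \<in> e \<longrightarrow> e = {p,l}"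
    using leaf_edge[OF T lL l'N l'l] by blast
  have pl: "p \<noteq> l" "p \<in> N" "l \<in> N" using edge_card2[OF T e] by auto
  have dp1: "tdeg TE p \<ge> 1" by (rule tdeg_pos[OF fin e])
  have dp3: "tdeg TE p \<le> 3" using deg pl by blast
  let ?N' = "N - {l}" and ?TE' = "TE - {{p,l}}"
  note ds = del_struct[OF T e u]
  have iso: "\<forall>e\<in>?TE'. l \<notin> e" by (rule no_l_edges[OF u])
  consider (one) "tdeg TE p = 1" | (two) "tdeg TE p = 2" | (three) "tdeg TE p = 3" using dp1 dp3 by linarith
  then show ?case
  proof cases
    case one
    have e': "{l,p} \<in> TE" using e by (simp add: insert_commute)
    have up: "\<forall>e\<in>TE. p \<in> e \<longrightarrow> e = {l,p}" using deg1_unique[OF fin _ e'] one by simp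
    have NS: "N \<subseteq> {p,l}"
    proof
      fix v assume "v \<in> N"
      then have r: "(l,v) \<in> (tadj TE)\<^sup>*" using tree_conn[OF T pl(3)] by simp
      show "v \<in> {p,l}"
      proof (rule rt_closed[OF r])
        show "l \<in> {p,l}" by simp
      next
        fix x w assume xw: "{x,w} \<in> TE" "x \<in> {p,l}"
        have wx: "w \<in> {x,w}" by simp
        show "w \<in> {p,l}"
        proof (cases "x = l")
          case True
          then have "l \<in> {x,w}" by simp
          then have "{x,w} = {p,l}" by (rule uniqD[OF u xw(1)])
          then show ?thesis using wx by (simp only:)
        next
          case False
          then have "x = p" using xw(2) by simp
          then have "p \<in> {x,w}" by simp
          then have "{x,w} = {l,p}" by (rule uniqD[OF up xw(1)])
          then have "w \<in> {l,p}" using wx by (simp only:)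
          then show ?thesis by blast
        qed
      qed
    qed
    have "l' \<in> {p,l}" using l'N NS by (rule subsetD[rotated])
    then have "l' = p" using l'l by simp
    have Lp: "?L - {l} = {p}"
    proof (rule equalityI)
      show "?L - {l} \<subseteq> {p}"
      proof
        fix v assume v: "v \<in> ?L - {l}"
        then have "v \<in> {p,l}" using LN NS by blast
        then show "v \<in> {p}" using v by simp
      qed
      show "{p} \<subseteq> ?L - {l}" using l'(1) \<open>l' = p\<close> pl(1) by simp
    qed
    have "E - {a} = \<beta> ` (?L - {l})" using bij_img_diff[OF bij, of "{l}"] lL bl by simp
    then have Ea: "E - {a} = {\<beta> p}" unfolding Lp by simp
    show ?thesis
      using single_dec[of "\<beta> p"] single_wid[of "E - {a}" "{0}" "\<lambda>_. \<beta> p"] unfolding Ea[symmetric]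
      by (intro exI[of _ "{0}"] exI[of _ "{}"] exI[of _ "\<lambda>_. \<beta> p"]) simp
  next
    case two
    define \<beta>' where "\<beta>' = \<beta>(p := a)"
    have pL: "p \<notin> ?L" using two unfolding tleaves_def by simp
    have L': "tleaves ?N' ?TE' = insert p (?L - {l})"
    proof (rule set_eqI)
      fix v
      show "v \<in> tleaves ?N' ?TE' \<longleftrightarrow> v \<in> insert p (?L - {l})"
      proof (cases "v = p")
        case True
        then show ?thesis using two ds(3) pl unfolding tleaves_def by simp
      next
        case False
        then show ?thesis
        proof (cases "v = l")
          case True then show ?thesis using pl unfolding tleaves_def by simp
        next
          case False
          then show ?thesis using ds(2)[OF \<open>v \<noteq> p\<close> False] \<open>v \<noteq> p\<close> unfolding tleaves_def by simp
        qed
      qed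
    qed
    have bij1: "bij_betw \<beta> (?L - {l}) (E - {a})" using bij_diff1[OF bij lL] bl by simp
    have "bij_betw \<beta>' (insert p (?L - {l})) (insert a (E - {a}))"
      unfolding \<beta>'_def by (rule bij_upd[OF bij1]) (use pL in auto)
    then have bij': "bij_betw \<beta>' (tleaves ?N' ?TE') E" unfolding L' using less.prems(2) by (simp add: insert_absorb)
    have deg': "\<forall>v\<in>?N'. tdeg ?TE' v \<le> 3"
    proof
      fix v assume "v \<in> ?N'"
      then show "tdeg ?TE' v \<le> 3" using ds(2)[of v] ds(3) deg dp3 by (cases "v = p") auto
    qed
    have D': "decE E ?N' ?TE' \<beta>'" unfolding decE_def using ds(1) deg' bij' by simp
    have ord: "ordE E ?N' ?TE' \<beta>' f = ordE E N TE \<beta> f" if f: "f \<in> ?TE'" for f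
    proof -
      define c where "c = (SOME a. a \<in> f)"
      have cf: "c \<in> f" unfolding c_def by (rule some_in[OF f ds(1)])
      let ?S = "side_leaves N TE f c" and ?S' = "side_leaves ?N' ?TE' f c"
      have "\<beta>' ` ?S' = \<beta> ` ?S"
      proof
        show "\<beta>' ` ?S' \<subseteq> \<beta> ` ?S"
        proof
          fix y assume "y \<in> \<beta>' ` ?S'"
          then obtain v where v: "v \<in> ?S'" "y = \<beta>' v" by blast
          then have vL: "v \<in> insert p (?L - {l})" and r: "(c,v) \<in> (tadj (?TE' - {f}))\<^sup>*"
            unfolding side_leaves_def L' by simp_all
          show "y \<in> \<beta> ` ?S"
          proof (cases "v = p")
            case True
            then have "(c,l) \<in> (tadj (TE - {f}))\<^sup>*" using ds(5)[OF f cf] r by simp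
            then have "l \<in> ?S" using lL unfolding side_leaves_def by simp
            moreover have "y = \<beta> l" using v(2) True bl unfolding \<beta>'_def by simp
            ultimately show ?thesis by blast
          next
            case False
            then have vL2: "v \<in> ?L" "v \<noteq> l" using vL by simp_all
            then have "(c,v) \<in> (tadj (TE - {f}))\<^sup>*" using ds(4)[OF f cf vL2(2)] r by simp
            then have "v \<in> ?S" using vL2 unfolding side_leaves_def by simp
            moreover have "y = \<beta> v" using v(2) False unfolding \<beta>'_def by simp
            ultimately show ?thesis by blast
          qed
        qed
      next
        show "\<beta> ` ?S \<subseteq> \<beta>' ` ?S'"
        proof
          fix y assume "y \<in> \<beta> ` ?S"
          then obtain v where v: "v \<in> ?S" "y = \<beta> v" by blast
          then have vL: "v \<in> ?L" and r: "(c,v) \<in> (tadj (TE - {f}))\<^sup>*"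
            unfolding side_leaves_def by simp_all
          show "y \<in> \<beta>' ` ?S'"
          proof (cases "v = l")
            case True
            then have "(c,p) \<in> (tadj (?TE' - {f}))\<^sup>*" using ds(5)[OF f cf] r by simp
            then have "p \<in> ?S'" unfolding side_leaves_def L' by simp
            moreover have "y = \<beta>' p" using v(2) True bl unfolding \<beta>'_def by simp
            ultimately show ?thesis by blast
          next
            case False
            then have "(c,v) \<in> (tadj (?TE' - {f}))\<^sup>*" using ds(4)[OF f cf False] r by simp
            then have "v \<in> ?S'" using vL False unfolding side_leaves_def L' by simp
            moreover have "y = \<beta>' v" using v(2) vL pL unfolding \<beta>'_def by auto
            ultimately show ?thesis by blast
          qed
        qed
      qed
      then show ?thesis unfolding ordE_def c_def by simp
    qed
    have W: "widE E ?N' ?TE' \<beta>' \<le> widE E N TE \<beta>"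
    proof (rule widE_le)
      show "finite ?TE'" using fin by simp
      fix f assume f: "f \<in> ?TE'"
      then have "f \<in> TE" by simp
      then have "ordE E N TE \<beta> f \<le> widE E N TE \<beta>" by (rule ord_le_widE[OF fin])
      then show "ordE E ?N' ?TE' \<beta>' f \<le> widE E N TE \<beta>" using ord[OF f] by simp
    qed
    have "card ?N' < card N" using finN pl(3) by (rule card_Diff1_less)
    then obtain N2 TE2 \<beta>2 where R: "decE (E - {a}) N2 TE2 \<beta>2" "widE (E - {a}) N2 TE2 \<beta>2 \<le> widE E ?N' ?TE' \<beta>'"
      using less.hyps[OF _ D' less.prems(2,3)] by blast
    show ?thesis using R W by (intro exI[of _ N2] exI[of _ TE2] exI[of _ \<beta>2]) simp
  next
    case three
    have pL: "p \<notin> ?L" using three unfolding tleaves_def by simp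
    have L': "tleaves ?N' ?TE' = ?L - {l}"
    proof (rule set_eqI)
      fix v
      show "v \<in> tleaves ?N' ?TE' \<longleftrightarrow> v \<in> ?L - {l}"
      proof (cases "v = p")
        case True
        then show ?thesis using three ds(3) pL unfolding tleaves_def by simp
      next
        case False
        then show ?thesis
        proof (cases "v = l")
          case True then show ?thesis unfolding tleaves_def by simp
        next
          case False
          then show ?thesis using ds(2)[OF \<open>v \<noteq> p\<close> False] \<open>v \<noteq> p\<close> unfolding tleaves_def by simp
        qed
      qed
    qed
    have bij1: "bij_betw \<beta> (?L - {l}) (E - {a})" using bij_diff1[OF bij lL] bl by simp
    have deg': "\<forall>v\<in>?N'. tdeg ?TE' v \<le> 3"
    proof
      fix v assume "v \<in> ?N'"
      then show "tdeg ?TE' v \<le> 3" using ds(2)[of v] ds(3) deg dp3 by (cases "v = p") auto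
    qed
    have D': "decE (E - {a}) ?N' ?TE' \<beta>" unfolding decE_def L' using ds(1) deg' bij1 by simp
    have ord: "ordE (E - {a}) ?N' ?TE' \<beta> f \<le> ordE E N TE \<beta> f" if f: "f \<in> ?TE'" for f
    proof -
      define c where "c = (SOME a. a \<in> f)"
      have cf: "c \<in> f" unfolding c_def by (rule some_in[OF f ds(1)])
      let ?S = "side_leaves N TE f c" and ?S' = "side_leaves ?N' ?TE' f c"
      have SS: "?S' = ?S - {l}"
      proof (rule set_eqI)
        fix v show "v \<in> ?S' \<longleftrightarrow> v \<in> ?S - {l}"
        proof (cases "v = l")
          case True then show ?thesis unfolding side_leaves_def L' by simp
        next
          case False
          then show ?thesis using ds(4)[OF f cf False] unfolding side_leaves_def L' by simp
        qed
      qed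
      have SL: "?S \<subseteq> ?L" by (rule side_sub)
      have im: "\<beta> ` (?S - {l}) = \<beta> ` ?S - {a}"
      proof -
        have "inj_on \<beta> ?L" using bij unfolding bij_betw_def by simp
        then have "\<beta> ` (?S - {l}) = \<beta> ` ?S - \<beta> ` {l}"
          by (rule inj_on_image_set_diff) (use SL lL in auto)
        then show ?thesis using bl by simp
      qed
      have XE: "\<beta> ` ?S \<subseteq> E" using SL bij unfolding bij_betw_def by blast
      have "fe (E - {a}) (\<beta> ` ?S - {a}) \<le> fe E (\<beta> ` ?S)" by (rule fe_mono_del[OF finE XE])
      then show ?thesis unfolding ordE_def c_def[symmetric] SS im .
    qed
    have W: "widE (E - {a}) ?N' ?TE' \<beta> \<le> widE E N TE \<beta>"
    proof (rule widE_le)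
      show "finite ?TE'" using fin by simp
      fix f assume f: "f \<in> ?TE'"
      then have "f \<in> TE" by simp
      then have "ordE E N TE \<beta> f \<le> widE E N TE \<beta>" by (rule ord_le_widE[OF fin])
      then show "ordE (E - {a}) ?N' ?TE' \<beta> f \<le> widE E N TE \<beta>" using ord[OF f] by simp
    qed
    show ?thesis using D' W by (intro exI[of _ ?N'] exI[of _ ?TE'] exI[of _ \<beta>]) simp
  qed
qed

lemma rt_subdiv:
  assumes "(u,v) \<in> (tadj G)\<^sup>*" "G - {{p,l}} \<subseteq> G'" "{p,m} \<in> G'" "{m,l} \<in> G'"
  shows "(u,v) \<in> (tadj G')\<^sup>*"
  using assms(1)
proof (induction rule: rtrancl_induct)
  case base then show ?case by simp
next
  case (step y z)
  have yz: "{y,z} \<in> G" using step(2) unfolding tadj_def by simp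
  show ?case
  proof (cases "{y,z} = {p,l}")
    case True
    then have "(y = p \<and> z = l) \<or> (y = l \<and> z = p)" by (simp add: doubleton_eq_iff)
    then show ?thesis
    proof
      assume h: "y = p \<and> z = l"
      have "(y,m) \<in> tadj G'" "(m,z) \<in> tadj G'" using h assms(3,4) unfolding tadj_def by simp_all
      then show ?thesis using step.IH by (meson rtrancl_into_rtrancl)
    next
      assume h: "y = l \<and> z = p"
      have "(y,m) \<in> tadj G'" "(m,z) \<in> tadj G'" using h assms(3,4) unfolding tadj_def
        by (simp_all add: insert_commute)
      then show ?thesis using step.IH by (meson rtrancl_into_rtrancl)
    qed
  next
    case False
    then have "{y,z} \<in> G'" using yz assms(2) by blast
    then have "(y,z) \<in> tadj G'" unfolding tadj_def by simp
    then show ?thesis using step.IH by (rule rtrancl_into_rtrancl[rotated])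
  qed
qed

lemma reach_in_N:
  assumes T: "is_tree N TE" and "G \<subseteq> TE" "(c,v) \<in> (tadj G)\<^sup>*" "c \<in> N"
  shows "v \<in> N"
proof (rule rt_closed[OF assms(3,4)])
  fix x y assume "{x,y} \<in> G" "x \<in> N"
  then have "{x,y} \<in> TE" using assms(2) by blast
  then show "y \<in> N" using edge_card2[OF T] by blast
qed

context
  fixes N :: "nat set" and TE p l m la
  assumes T: "is_tree N TE" and e: "{p,l} \<in> TE" and u: "\<forall>e\<in>TE. l \<in> e \<longrightarrow> e = {p,l}"
    and mN: "m \<notin> N" and laN: "la \<notin> N" and mla: "m \<noteq> la"
begin

definition "TEn = insert {p,m} (insert {m,l} (insert {m,la} (TE - {{p,l}})))"
definition "Nn = insert m (insert la N)"

lemma pl: "p \<noteq> l" "p \<in> N" "l \<in> N"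
  using edge_card2[OF T e] by auto

lemma neqs: "m \<noteq> p" "m \<noteq> l" "la \<noteq> p" "la \<noteq> l"
  using pl mN laN by auto

lemma old_edge: "f \<in> TE \<Longrightarrow> x \<in> f \<Longrightarrow> x \<in> N"
  using T unfolding is_tree_def by blast

lemma m_not_old: "f \<in> TE \<Longrightarrow> m \<notin> f" "f \<in> TE \<Longrightarrow> la \<notin> f"
  using old_edge mN laN by blast+

lemma new_not_old: "{p,m} \<notin> TE" "{m,l} \<notin> TE" "{m,la} \<notin> TE"
  using m_not_old(1) by blast+

lemma dbl_neqs: "{p,m} \<noteq> {m,l}" "{p,m} \<noteq> {m,la}" "{m,l} \<noteq> {m,la}"
  using pl neqs mla by (simp_all add: doubleton_eq_iff)

lemma TEn_cases:
  assumes "f \<in> TEn"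
  obtains "f = {p,m}" | "f = {m,l}" | "f = {m,la}" | "f \<in> TE" "f \<noteq> {p,l}"
  using assms unfolding TEn_def by blast

lemma old_in_TEn: "f \<in> TE \<Longrightarrow> f \<noteq> {p,l} \<Longrightarrow> f \<in> TEn"
  unfolding TEn_def by simp

lemma new_in_TEn: "{p,m} \<in> TEn" "{m,l} \<in> TEn" "{m,la} \<in> TEn"
  unfolding TEn_def by simp_all

lemma u_la: "\<forall>f\<in>TEn. la \<in> f \<longrightarrow> f = {m,la}"
proof (intro ballI impI)
  fix f assume f: "f \<in> TEn" and x: "la \<in> f"
  show "f = {m,la}"
    using f
  proof (cases rule: TEn_cases)
    case 1 then show ?thesis using x neqs mla by auto
  next
    case 2 then show ?thesis using x neqs mla by auto
  next
    case 3 then show ?thesis .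
  next
    case 4 then show ?thesis using x m_not_old by blast
  qed
qed

lemma u_l: "\<forall>f\<in>TEn. l \<in> f \<longrightarrow> f = {m,l}"
proof (intro ballI impI)
  fix f assume f: "f \<in> TEn" and x: "l \<in> f"
  show "f = {m,l}"
    using f
  proof (cases rule: TEn_cases)
    case 1 then show ?thesis using x neqs pl by auto
  next
    case 2 then show ?thesis .
  next
    case 3 then show ?thesis using x neqs by auto
  next
    case 4
    have "f = {p,l}" using uniqD[OF u 4(1) x] .
    then show ?thesis using 4(2) by simp
  qed
qed

lemma finTE: "finite TE" using tree_finite_edges[OF T] .

lemma finTEn: "finite TEn" unfolding TEn_def using finTE by simp

lemma edges_m: "{f\<in>TEn. m \<in> f} = {{p,m},{m,l},{m,la}}"
proof (rule set_eqI, rule iffI)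
  fix f assume "f \<in> {f\<in>TEn. m \<in> f}"
  then have f: "f \<in> TEn" and x: "m \<in> f" by simp_all
  show "f \<in> {{p,m},{m,l},{m,la}}"
    using f
  proof (cases rule: TEn_cases)
    case 4 then show ?thesis using x m_not_old by blast
  qed simp_all
next
  fix f assume "f \<in> {{p,m},{m,l},{m,la}}"
  then show "f \<in> {f\<in>TEn. m \<in> f}" using new_in_TEn by auto
qed

lemma tdeg_m: "tdeg TEn m = 3"
  unfolding tdeg_def edges_m using dbl_neqs by simp

lemma tdeg_la: "tdeg TEn la = 1"
  unfolding tdeg_def edges_at_l[OF new_in_TEn(3) u_la] by simp

lemma tdeg_l: "tdeg TEn l = tdeg TE l"
  unfolding tdeg_def edges_at_l[OF new_in_TEn(2) u_l] edges_at_l[OF e u] by simp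

lemma edges_p: "{f\<in>TEn. p \<in> f} = insert {p,m} ({f\<in>TE. p \<in> f} - {{p,l}})"
proof (rule set_eqI, rule iffI)
  fix f assume "f \<in> {f\<in>TEn. p \<in> f}"
  then have f: "f \<in> TEn" and x: "p \<in> f" by simp_all
  show "f \<in> insert {p,m} ({f\<in>TE. p \<in> f} - {{p,l}})"
    using f
  proof (cases rule: TEn_cases)
    case 1 then show ?thesis by simp
  next
    case 2 then show ?thesis using x neqs pl by auto
  next
    case 3 then show ?thesis using x neqs by auto
  next
    case 4 then show ?thesis using x by simp
  qed
next
  fix f assume "f \<in> insert {p,m} ({f\<in>TE. p \<in> f} - {{p,l}})"
  then show "f \<in> {f\<in>TEn. p \<in> f}" using new_in_TEn old_in_TEn by auto
qed

lemma tdeg_p: "tdeg TEn p = tdeg TE p"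
proof -
  have fin: "finite {f\<in>TE. p \<in> f}" using finTE by simp
  have ein: "{p,l} \<in> {f\<in>TE. p \<in> f}" using e by simp
  have "{p,m} \<notin> {f\<in>TE. p \<in> f} - {{p,l}}" using new_not_old by simp
  then have "card {f\<in>TEn. p \<in> f} = Suc (card ({f\<in>TE. p \<in> f} - {{p,l}}))"
    unfolding edges_p using fin by simp
  also have "\<dots> = card {f\<in>TE. p \<in> f}" using fin ein card_Diff1_less[OF fin ein]
    by (simp add: card_Diff_singleton)
  finally show ?thesis unfolding tdeg_def .
qed

lemma edges_other: "v \<noteq> p \<Longrightarrow> v \<noteq> l \<Longrightarrow> v \<noteq> m \<Longrightarrow> v \<noteq> la \<Longrightarrow> {f\<in>TEn. v \<in> f} = {f\<in>TE. v \<in> f}"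
proof (rule set_eqI, rule iffI)
  fix f assume v: "v \<noteq> p" "v \<noteq> l" "v \<noteq> m" "v \<noteq> la" and "f \<in> {f\<in>TEn. v \<in> f}"
  then have f: "f \<in> TEn" and x: "v \<in> f" by simp_all
  show "f \<in> {f\<in>TE. v \<in> f}"
    using f
  proof (cases rule: TEn_cases)
    case 4 then show ?thesis using x by simp
  qed (use x v in auto)
next
  fix f assume v: "v \<noteq> p" "v \<noteq> l" "v \<noteq> m" "v \<noteq> la" and "f \<in> {f\<in>TE. v \<in> f}"
  then have f: "f \<in> TE" and x: "v \<in> f" by simp_all
  have "f \<noteq> {p,l}" using x v by auto
  then show "f \<in> {f\<in>TEn. v \<in> f}" using old_in_TEn[OF f] x by simp
qed

lemma tdeg_new: "tdeg TEn v = (if v = m then 3 else if v = la then 1 else tdeg TE v)"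
proof -
  consider "v = m" | "v = la" | "v = p" | "v = l" | "v \<noteq> p" "v \<noteq> l" "v \<noteq> m" "v \<noteq> la" by blast
  then show ?thesis
  proof cases
    case 1 then show ?thesis using tdeg_m by simp
  next
    case 2 then show ?thesis using tdeg_la mla by simp
  next
    case 3 then show ?thesis using tdeg_p neqs by simp
  next
    case 4 then show ?thesis using tdeg_l neqs by simp
  next
    case 5 then show ?thesis unfolding tdeg_def using edges_other[OF 5] by simp
  qed
qed

lemma leaves_new: "tleaves Nn TEn = insert la (tleaves N TE)"
proof (rule set_eqI)
  fix v
  show "v \<in> tleaves Nn TEn \<longleftrightarrow> v \<in> insert la (tleaves N TE)"
  proof (cases "v = m")
    case True then show ?thesis using tdeg_m mN mla unfolding tleaves_def by simp
  next
    case False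
    then show ?thesis
    proof (cases "v = la")
      case True then show ?thesis using tdeg_la unfolding tleaves_def Nn_def by simp
    next
      case False
      then show ?thesis using tdeg_new[of v] \<open>v \<noteq> m\<close> unfolding tleaves_def Nn_def by auto
    qed
  qed
qed

lemma reach_p: "v \<in> Nn \<Longrightarrow> (p,v) \<in> (tadj TEn)\<^sup>*"
proof -
  assume v: "v \<in> Nn"
  have sub: "TE - {{p,l}} \<subseteq> TEn" unfolding TEn_def by blast
  have pm: "(p,m) \<in> tadj TEn" using new_in_TEn unfolding tadj_def by simp
  have ml: "(m,la) \<in> tadj TEn" using new_in_TEn unfolding tadj_def by simp
  consider "v = m" | "v = la" | "v \<in> N" using v unfolding Nn_def by blast
  then show ?thesis
  proof cases
    case 1 then show ?thesis using pm by simp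
  next
    case 2 then show ?thesis using pm ml by (meson converse_rtrancl_into_rtrancl r_into_rtrancl)
  next
    case 3
    then have "(p,v) \<in> (tadj TE)\<^sup>*" using tree_conn[OF T pl(2)] by simp
    then show ?thesis by (rule rt_subdiv[OF _ sub new_in_TEn(1,2)])
  qed
qed

lemma tree_new: "is_tree Nn TEn"
  unfolding is_tree_def
proof (intro conjI ballI)
  show "finite Nn" using T unfolding is_tree_def Nn_def by simp
  show "Nn \<noteq> {}" unfolding Nn_def by simp
next
  fix f assume f: "f \<in> TEn"
  have NN: "N \<subseteq> Nn" unfolding Nn_def by blast
  have mm: "m \<in> Nn" "la \<in> Nn" unfolding Nn_def by simp_all
  show "card f = 2" using f
  proof (cases rule: TEn_cases)
    case 4 then show ?thesis using T unfolding is_tree_def by simp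
  qed (use neqs mla in auto)
  show "f \<subseteq> Nn" using f
  proof (cases rule: TEn_cases)
    case 4 then show ?thesis using T NN unfolding is_tree_def by blast
  qed (use mm pl NN in auto)
next
  fix x y assume "x \<in> Nn" "y \<in> Nn"
  then have "(p,x) \<in> (tadj TEn)\<^sup>*" "(p,y) \<in> (tadj TEn)\<^sup>*" using reach_p by simp_all
  then show "(x,y) \<in> (tadj TEn)\<^sup>*" using rt_sym by (meson rtrancl_trans)
next
  have c1: "card (TE - {{p,l}}) = card TE - 1" using finTE e by simp
  have "card TEn = card (TE - {{p,l}}) + 3"
    unfolding TEn_def using finTE new_not_old dbl_neqs by simp
  moreover have "card Nn = card N + 2" unfolding Nn_def using mN laN mla T unfolding is_tree_def by simp
  moreover have "card TE = card N - 1" using T unfolding is_tree_def by simp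
  moreover have "card TE \<ge> 1" using finTE e by (metis One_nat_def Suc_leI card_gt_0_iff empty_iff)
  ultimately show "card TEn = card Nn - 1" using c1 by simp
qed

lemma lleaf: "l \<in> tleaves N TE" using leaf_tdeg1(2)[OF T e u] .

lemma in_dbl: "y \<in> {x,y}" by simp

lemma side_pm_m: "side_leaves Nn TEn {p,m} m = {la, l}"
proof -
  let ?G = "TEn - {{p,m}}"
  have cl: "v \<in> {m,la,l}" if r: "(m,v) \<in> (tadj ?G)\<^sup>*" for v
  proof (rule rt_closed[OF r])
    show "m \<in> {m,la,l}" by simp
  next
    fix x y assume xy: "{x,y} \<in> ?G" "x \<in> {m,la,l}"
    then have xyT: "{x,y} \<in> TEn" and ne: "{x,y} \<noteq> {p,m}" by simp_all
    show "y \<in> {m,la,l}" using xyT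
    proof (cases rule: TEn_cases)
      case 1 then show ?thesis using ne by simp
    next
      case 2 then have "y \<in> {m,l}" using in_dbl[of y x] by (simp only:)
      then show ?thesis by blast
    next
      case 3 then have "y \<in> {m,la}" using in_dbl[of y x] by (simp only:)
      then show ?thesis by blast
    next
      case 4
      have "x \<in> N" using old_edge[OF 4(1)] by simp
      moreover have "x = m \<or> x = la \<or> x = l" using xy(2) by simp
      ultimately have "x = l" using mN laN by auto
      then have "{x,y} = {p,l}" using uniqD[OF u 4(1)] by simp
      then show ?thesis using 4(2) by simp
    qed
  qed
  have e1: "(m,la) \<in> tadj ?G" "(m,l) \<in> tadj ?G" using new_in_TEn dbl_neqs unfolding tadj_def
    by (simp_all add: insert_commute)
  show ?thesis
  proof (rule equalityI)
    show "side_leaves Nn TEn {p,m} m \<subseteq> {la, l}"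
    proof
      fix v assume "v \<in> side_leaves Nn TEn {p,m} m"
      then have "v \<in> insert la (tleaves N TE)" "(m,v) \<in> (tadj ?G)\<^sup>*"
        unfolding side_leaves_def leaves_new by simp_all
      moreover have "m \<notin> insert la (tleaves N TE)" using mN mla unfolding tleaves_def by simp
      ultimately show "v \<in> {la,l}" using cl by blast
    qed
    have "(m,la) \<in> (tadj ?G)\<^sup>*" "(m,l) \<in> (tadj ?G)\<^sup>*" using e1 by simp_all
    then have "la \<in> side_leaves Nn TEn {p,m} m" "l \<in> side_leaves Nn TEn {p,m} m"
      using lleaf unfolding side_leaves_def leaves_new by simp_all
    then show "{la, l} \<subseteq> side_leaves Nn TEn {p,m} m" by simp
  qed
qed

lemma side_pm_p: "side_leaves Nn TEn {p,m} p = tleaves N TE - {l}"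
proof -
  let ?G = "TEn - {{p,m}}"
  have cl: "v \<in> N - {l}" if r: "(p,v) \<in> (tadj ?G)\<^sup>*" for v
  proof (rule rt_closed[OF r])
    show "p \<in> N - {l}" using pl by simp
  next
    fix x y assume xy: "{x,y} \<in> ?G" "x \<in> N - {l}"
    then have xyT: "{x,y} \<in> TEn" and ne: "{x,y} \<noteq> {p,m}" by simp_all
    show "y \<in> N - {l}" using xyT
    proof (cases rule: TEn_cases)
      case 1 then show ?thesis using ne by simp
    next
      case 2
      have "x \<in> {x,y}" by simp
      then have "x \<in> {m,l}" unfolding 2 .
      then show ?thesis using xy(2) mN by auto
    next
      case 3
      have "x \<in> {x,y}" by simp
      then have "x \<in> {m,la}" unfolding 3 .
      then show ?thesis using xy(2) mN laN by auto
    next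
      case 4
      have yN: "y \<in> N" using old_edge[OF 4(1) in_dbl] .
      have "y \<noteq> l"
      proof
        assume "y = l"
        then have "{x,y} = {p,l}" using uniqD[OF u 4(1)] by simp
        then show False using 4(2) by simp
      qed
      then show ?thesis using yN by simp
    qed
  qed
  have sub: "TE - {{p,l}} \<subseteq> ?G"
  proof
    fix f assume f: "f \<in> TE - {{p,l}}"
    then have "f \<in> TEn" using old_in_TEn by simp
    moreover have "f \<noteq> {p,m}" using f new_not_old(1) by auto
    ultimately show "f \<in> ?G" by simp
  qed
  show ?thesis
  proof (rule equalityI)
    show "side_leaves Nn TEn {p,m} p \<subseteq> tleaves N TE - {l}"
    proof
      fix v assume "v \<in> side_leaves Nn TEn {p,m} p"
      then have "v \<in> insert la (tleaves N TE)" "(p,v) \<in> (tadj ?G)\<^sup>*"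
        unfolding side_leaves_def leaves_new by simp_all
      then show "v \<in> tleaves N TE - {l}" using cl laN by blast
    qed
    show "tleaves N TE - {l} \<subseteq> side_leaves Nn TEn {p,m} p"
    proof
      fix v assume v: "v \<in> tleaves N TE - {l}"
      then have "v \<in> N" unfolding tleaves_def by simp
      then have "(p,v) \<in> (tadj TE)\<^sup>*" using tree_conn[OF T pl(2)] by simp
      then have "(p,v) \<in> (tadj (TE - {{p,l}}))\<^sup>*" using rt_pendant[OF u pl(1) pl(1)] v by blast
      then have "(p,v) \<in> (tadj ?G)\<^sup>*" by (rule rt_mono[OF sub])
      then show "v \<in> side_leaves Nn TEn {p,m} p" using v unfolding side_leaves_def leaves_new by simp
    qed
  qed
qed

lemma side_old:
  assumes f: "f \<in> TE" "f \<noteq> {p,l}" and c: "c \<in> f"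
  shows "side_leaves Nn TEn f c = side_leaves N TE f c \<union> (if l \<in> side_leaves N TE f c then {la} else {})"
proof -
  let ?R = "(tadj (TE - {f}))\<^sup>*" and ?R' = "(tadj (TEn - {f}))\<^sup>*"
  have cN: "c \<in> N" using old_edge[OF f(1) c] .
  have sub1: "TE - {f} - {{p,l}} \<subseteq> TEn - {f}"
  proof
    fix g assume g: "g \<in> TE - {f} - {{p,l}}"
    then have "g \<in> TEn" using old_in_TEn by simp
    then show "g \<in> TEn - {f}" using g by simp
  qed
  have fpm: "f \<noteq> {p,m}" "f \<noteq> {m,l}" "f \<noteq> {m,la}" using f(1) new_not_old by auto
  have in1: "{p,m} \<in> TEn - {f}" "{m,l} \<in> TEn - {f}" "{m,la} \<in> TEn - {f}" using new_in_TEn fpm by simp_all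
  have fwd: "(c,v) \<in> ?R'" if "(c,v) \<in> ?R" for v
    by (rule rt_subdiv[OF that sub1 in1(1,2)])
  have RN: "v \<in> N" if "(c,v) \<in> ?R" for v
    by (rule reach_in_N[OF T _ that cN]) blast
  have pl_e: "(p,l) \<in> tadj (TE - {f})" "(l,p) \<in> tadj (TE - {f})"
    using e f unfolding tadj_def by (simp_all add: insert_commute)
  define S where "S = {v. (c,v) \<in> ?R} \<union> (if (c,l) \<in> ?R then {m,la} else {})"
  have SN: "(c,x) \<in> ?R" if "x \<in> S" "x \<in> N" for x
    using that mN laN unfolding S_def by (auto split: if_splits)
  have SnN: "(c,l) \<in> ?R \<and> x \<in> {m,la}" if "x \<in> S" "x \<notin> N" for x
    using that RN unfolding S_def by (auto split: if_splits)
  have bwd: "v \<in> S" if r: "(c,v) \<in> ?R'" for v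
  proof (rule rt_closed[OF r])
    show "c \<in> S" unfolding S_def by simp
  next
    fix x y assume xy: "{x,y} \<in> TEn - {f}" and xS: "x \<in> S"
    then have xyT: "{x,y} \<in> TEn" and xyf: "{x,y} \<noteq> f" by simp_all
    show "y \<in> S" using xyT
    proof (cases rule: TEn_cases)
      case 1
      then have "(x = p \<and> y = m) \<or> (x = m \<and> y = p)" by (auto simp: doubleton_eq_iff)
      then show ?thesis
      proof
        assume h: "x = p \<and> y = m"
        then have "(c,p) \<in> ?R" using SN xS pl by simp
        then have "(c,l) \<in> ?R" using pl_e(1) by (rule rtrancl_into_rtrancl)
        then show ?thesis using h unfolding S_def by simp
      next
        assume h: "x = m \<and> y = p"
        then have "(c,l) \<in> ?R" using SnN xS mN by simp
        then have "(c,p) \<in> ?R" using pl_e(2) by (rule rtrancl_into_rtrancl)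
        then show ?thesis using h unfolding S_def by simp
      qed
    next
      case 2
      then have "(x = m \<and> y = l) \<or> (x = l \<and> y = m)" using neqs by (auto simp: doubleton_eq_iff)
      then show ?thesis
      proof
        assume h: "x = m \<and> y = l"
        then have "(c,l) \<in> ?R" using SnN xS mN by simp
        then show ?thesis using h unfolding S_def by simp
      next
        assume h: "x = l \<and> y = m"
        then have "(c,l) \<in> ?R" using SN xS pl by simp
        then show ?thesis using h unfolding S_def by simp
      qed
    next
      case 3
      have "x \<in> {x,y}" by simp
      then have "x \<in> {m,la}" unfolding 3 .
      then have "x \<notin> N" using mN laN by auto
      then have "(c,l) \<in> ?R" using SnN xS by simp
      moreover have "y \<in> {m,la}" using in_dbl[of y x] unfolding 3 .
      ultimately show ?thesis unfolding S_def by auto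
    next
      case 4
      have "x \<in> N" using old_edge[OF 4(1)] by simp
      then have "(c,x) \<in> ?R" using SN xS by simp
      moreover have "(x,y) \<in> tadj (TE - {f})" using 4(1) xyf unfolding tadj_def by simp
      ultimately have "(c,y) \<in> ?R" by (rule rtrancl_into_rtrancl)
      then show ?thesis unfolding S_def by simp
    qed
  qed
  have lmla: "(l,m) \<in> tadj (TEn - {f})" "(m,la) \<in> tadj (TEn - {f})"
    using in1 unfolding tadj_def by (simp_all add: insert_commute)
  have laL: "la \<notin> tleaves N TE" using laN unfolding tleaves_def by simp
  show ?thesis
  proof (rule set_eqI)
    fix v
    show "v \<in> side_leaves Nn TEn f c \<longleftrightarrow>
          v \<in> side_leaves N TE f c \<union> (if l \<in> side_leaves N TE f c then {la} else {})"
    proof (cases "v = la")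
      case True
      have "(c,la) \<in> ?R' \<longleftrightarrow> (c,l) \<in> ?R"
      proof
        assume "(c,la) \<in> ?R'"
        then have "la \<in> S" by (rule bwd)
        then show "(c,l) \<in> ?R" using SnN laN by simp
      next
        assume "(c,l) \<in> ?R"
        then have "(c,l) \<in> ?R'" by (rule fwd)
        then show "(c,la) \<in> ?R'" using lmla by (meson rtrancl_into_rtrancl)
      qed
      then show ?thesis using True laL lleaf unfolding side_leaves_def leaves_new by auto
    next
      case False
      have "(c,v) \<in> ?R' \<longleftrightarrow> (c,v) \<in> ?R" if "v \<in> N"
      proof
        assume "(c,v) \<in> ?R'"
        then have "v \<in> S" by (rule bwd)
        then show "(c,v) \<in> ?R" using SN that by simp
      next
        assume "(c,v) \<in> ?R"
        then show "(c,v) \<in> ?R'" by (rule fwd)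
      qed
      then have eqv: "(c,v) \<in> ?R' \<longleftrightarrow> (c,v) \<in> ?R" if "v \<in> tleaves N TE"
        using that unfolding tleaves_def by simp
      have "v \<in> side_leaves Nn TEn f c \<longleftrightarrow> v \<in> tleaves N TE \<and> (c,v) \<in> ?R'"
        unfolding side_leaves_def leaves_new using False by simp
      also have "\<dots> \<longleftrightarrow> v \<in> tleaves N TE \<and> (c,v) \<in> ?R" using eqv by blast
      also have "\<dots> \<longleftrightarrow> v \<in> side_leaves N TE f c" unfolding side_leaves_def by simp
      also have "\<dots> \<longleftrightarrow> v \<in> side_leaves N TE f c \<union> (if l \<in> side_leaves N TE f c then {la} else {})"
        using False by simp
      finally show ?thesis .
    qed
  qed
qed

lemma add_main:
  assumes D: "decE (E - {a}) N TE \<beta>" and aE: "a \<in> E" and bE: "b \<in> E" and tw: "twin E a b"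
    and finE: "finite E" and nl: "\<forall>v. (v,v) \<notin> E" and bl: "\<beta> l = b"
  shows "\<exists>N' TE' \<beta>'. decE E N' TE' \<beta>' \<and> widE E N' TE' \<beta>' \<le> widE (E - {a}) N TE \<beta>"
proof -
  let ?L = "tleaves N TE"
  define \<beta>' where "\<beta>' = \<beta>(la := a)"
  have deg: "\<forall>v\<in>N. tdeg TE v \<le> 3" and bij: "bij_betw \<beta> ?L (E - {a})"
    using D unfolding decE_def by auto
  have ab: "a \<noteq> b" using tw unfolding twin_def by simp
  have laL: "la \<notin> ?L" using laN unfolding tleaves_def by simp
  have LN: "?L \<subseteq> N" unfolding tleaves_def by blast
  have "bij_betw \<beta>' (insert la ?L) (insert a (E - {a}))"
    unfolding \<beta>'_def by (rule bij_upd[OF bij laL]) simp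
  then have bij': "bij_betw \<beta>' (tleaves Nn TEn) E" unfolding leaves_new using aE by (simp add: insert_absorb)
  have deg': "\<forall>v\<in>Nn. tdeg TEn v \<le> 3"
  proof
    fix v assume v: "v \<in> Nn"
    show "tdeg TEn v \<le> 3"
    proof (cases "v = m \<or> v = la")
      case True then show ?thesis using tdeg_new[of v] by auto
    next
      case False
      then have "v \<in> N" using v unfolding Nn_def by simp
      then show ?thesis using tdeg_new[of v] False deg by simp
    qed
  qed
  have D': "decE E Nn TEn \<beta>'" unfolding decE_def using tree_new deg' bij' by simp
  have bl': "\<beta>' l = b" "\<beta>' la = a" unfolding \<beta>'_def using bl neqs by simp_all
  let ?W = "widE (E - {a}) N TE \<beta>"
  have B0: "fe (E - {a}) {b} \<le> ?W"
  proof -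
    have "ordE (E - {a}) N TE \<beta> {p,l} \<le> ?W" by (rule ord_le_widE[OF finTE e])
    then show ?thesis unfolding pendant_ord[OF D e u] bl .
  qed
  have K1: "fe E {a} \<le> fe (E - {a}) {b}" by (rule twin_fe2[OF finE nl tw aE bE]) simp
  have K2: "fe E {b} \<le> fe (E - {a}) {b}" by (rule twin_fe2[OF finE nl tw aE bE]) simp
  have K3: "fe E {a,b} \<le> fe (E - {a}) {b}"
    using twin_fe1[OF finE tw aE bE, of "{b}"] ab bE by simp
  have ab_sub: "{a,b} \<subseteq> E" using aE bE by simp
  have inj: "inj_on \<beta> ?L" using bij unfolding bij_betw_def by simp
  have ordb: "ordE E Nn TEn \<beta>' f \<le> ?W" if f: "f \<in> TEn" for f
    using f
  proof (cases rule: TEn_cases)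
    case 1
    have "(SOME a. a \<in> {p,m}) \<in> {p,m}" by (rule someI[of _ p]) simp
    then consider "(SOME a. a \<in> {p,m}) = p" | "(SOME a. a \<in> {p,m}) = m" by blast
    then show ?thesis
    proof cases
      case 1
      have "\<beta>' ` (?L - {l}) = \<beta> ` (?L - {l})" unfolding \<beta>'_def using laL by (intro image_cong) auto
      also have "\<dots> = E - {a} - {b}" using bij_img_diff[OF bij, of "{l}"] lleaf bl by simp
      also have "\<dots> = E - {a,b}" by blast
      finally have im: "\<beta>' ` (?L - {l}) = E - {a,b}" .
      have "ordE E Nn TEn \<beta>' {p,m} = fe E {a,b}"
        unfolding ordE_def 1 side_pm_p im by (rule fe_sym[OF ab_sub])
      then show ?thesis using \<open>f = {p,m}\<close> K3 B0 by simp
    next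
      case 2
      have "\<beta>' ` {la, l} = {a, b}" using bl' by simp
      then have "ordE E Nn TEn \<beta>' {p,m} = fe E {a,b}"
        unfolding ordE_def 2 side_pm_m by simp
      then show ?thesis using \<open>f = {p,m}\<close> K3 B0 by simp
    qed
  next
    case 2
    have "ordE E Nn TEn \<beta>' {m,l} = fe E {b}" using pendant_ord[OF D' new_in_TEn(2) u_l] bl' by simp
    then show ?thesis using 2 K2 B0 by simp
  next
    case 3
    have "ordE E Nn TEn \<beta>' {m,la} = fe E {a}" using pendant_ord[OF D' new_in_TEn(3) u_la] bl' by simp
    then show ?thesis using 3 K1 B0 by simp
  next
    case 4
    define c where "c = (SOME a. a \<in> f)"
    have cf: "c \<in> f" unfolding c_def by (rule some_in[OF 4(1) T])
    let ?S = "side_leaves N TE f c"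
    have SL: "?S \<subseteq> ?L" by (rule side_sub)
    let ?X = "\<beta> ` ?S"
    have XE: "?X \<subseteq> E - {a}" using SL bij unfolding bij_betw_def by blast
    have bX: "b \<in> ?X \<longleftrightarrow> l \<in> ?S"
    proof -
      have "\<beta> l \<in> \<beta> ` ?S \<longleftrightarrow> l \<in> ?S" by (rule inj_on_image_mem_iff[OF inj lleaf SL])
      then show ?thesis using bl by simp
    qed
    have im0: "\<beta>' ` ?S = ?X" unfolding \<beta>'_def using SL laL by (intro image_cong) auto
    have "\<beta>' ` side_leaves Nn TEn f c = (if b \<in> ?X then insert a ?X else ?X)"
      unfolding side_old[OF 4(1,2) cf] using im0 bX bl' by auto
    then have "ordE E Nn TEn \<beta>' f = fe E (if b \<in> ?X then insert a ?X else ?X)"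
      unfolding ordE_def c_def[symmetric] by simp
    also have "\<dots> \<le> fe (E - {a}) ?X" by (rule twin_fe1[OF finE tw aE bE XE])
    also have "\<dots> = ordE (E - {a}) N TE \<beta> f" unfolding ordE_def c_def by simp
    also have "\<dots> \<le> ?W" by (rule ord_le_widE[OF finTE 4(1)])
    finally show ?thesis .
  qed
  have "widE E Nn TEn \<beta>' \<le> ?W" by (rule widE_le[OF finTEn ordb])
  then show ?thesis using D' by (intro exI[of _ Nn] exI[of _ TEn] exI[of _ \<beta>']) simp
qed

end


lemma fe_single0: "fe {b} {b} = 0"
  unfolding fe_def SVe_def by simp

lemma two_tree: "is_tree {0::nat,1} {{0,1}}"
  unfolding is_tree_def
proof (intro conjI ballI)
  fix x y :: nat assume "x \<in> {0,1}" "y \<in> {0,1}"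
  moreover have "(0,1) \<in> tadj {{0::nat,1}}" "(1,0) \<in> tadj {{0::nat,1}}"
    unfolding tadj_def by (simp_all add: insert_commute)
  ultimately show "(x,y) \<in> (tadj {{0,1}})\<^sup>*" by auto
qed simp_all

lemma add_leaf:
  assumes D: "decE (E - {a}) N TE \<beta>" and aE: "a \<in> E" and bE: "b \<in> E" and tw: "twin E a b"
    and finE: "finite E" and nl: "\<forall>v. (v,v) \<notin> E"
  shows "\<exists>N' TE' \<beta>'. decE E N' TE' \<beta>' \<and> widE E N' TE' \<beta>' \<le> widE (E - {a}) N TE \<beta>"
proof -
  let ?L = "tleaves N TE"
  have T: "is_tree N TE" and bij: "bij_betw \<beta> ?L (E - {a})" using D unfolding decE_def by auto
  have ab: "a \<noteq> b" using tw unfolding twin_def by simp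
  have bim: "b \<in> \<beta> ` ?L" using bij bE ab unfolding bij_betw_def by simp
  define l where "l = inv_into ?L \<beta> b"
  have lL: "l \<in> ?L" unfolding l_def by (rule inv_into_into[OF bim])
  have bl: "\<beta> l = b" unfolding l_def by (rule f_inv_into_f[OF bim])
  have LN: "?L \<subseteq> N" unfolding tleaves_def by blast
  have finN: "finite N" using T unfolding is_tree_def by simp
  show ?thesis
  proof (cases "\<exists>v\<in>N. v \<noteq> l")
    case False
    have NL: "N \<subseteq> {l}" using False by blast
    have "?L = {l}" using NL LN lL by blast
    then have Ea: "E - {a} = {b}" using bij bl unfolding bij_betw_def by simp
    have E2: "E = {a,b}" using Ea aE by blast
    define \<beta>' where "\<beta>' = (\<lambda>v::nat. if v = 0 then a else b)"
    have deg: "tdeg {{0::nat,1}} v = (if v \<in> {0,1} then 1 else 0)" for v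
    proof -
      have "{e\<in>{{0::nat,1}}. v \<in> e} = (if v \<in> {0,1} then {{0,1}} else {})" by auto
      then show ?thesis unfolding tdeg_def by simp
    qed
    have lv: "tleaves {0,1} {{0::nat,1}} = {0,1}" unfolding tleaves_def using deg by auto
    have bij': "bij_betw \<beta>' {0::nat,1} E" unfolding E2 \<beta>'_def bij_betw_def inj_on_def using ab by auto
    have D': "decE E {0,1} {{0,1}} \<beta>'" unfolding decE_def lv using two_tree deg bij' by simp
    have e: "{1,0} \<in> {{0::nat,1}}" by (simp add: insert_commute)
    have u: "\<forall>f\<in>{{0::nat,1}}. 0 \<in> f \<longrightarrow> f = {1,0}" by (simp add: insert_commute)
    have o: "ordE E {0,1} {{0,1}} \<beta>' {1,0} = fe E {a}"
      using pendant_ord[OF D' e u] unfolding \<beta>'_def by simp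
    have "fe E {a} \<le> fe (E - {a}) {b}" by (rule twin_fe2[OF finE nl tw aE bE]) simp
    then have "fe E {a} = 0" unfolding Ea fe_single0 by simp
    then have "widE E {0,1} {{0,1}} \<beta>' \<le> 0"
      using o by (intro widE_le) (simp_all add: insert_commute)
    then show ?thesis using D' by (intro exI[of _ "{0,1}"] exI[of _ "{{0,1}}"] exI[of _ \<beta>']) simp
  next
    case True
    then obtain v where v: "v \<in> N" "v \<noteq> l" by blast
    obtain p where e: "{p,l} \<in> TE" and u: "\<forall>e\<in>TE. l \<in> e \<longrightarrow> e = {p,l}"
      using leaf_edge[OF T lL v] by blast
    define m where "m = Suc (Max N)"
    have mN: "m \<notin> N" using Max_ge[OF finN] unfolding m_def by (metis Suc_n_not_le_n)
    have laN: "Suc m \<notin> N" using Max_ge[OF finN] unfolding m_def by (metis Suc_n_not_le_n le_Suc_eq)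
    have mla: "m \<noteq> Suc m" by simp
    show ?thesis by (rule add_main[OF T e u mN laN mla D aE bE tw finE nl bl])
  qed
qed

lemma twin_dbw:
  assumes finE: "finite E" and nl: "\<forall>v. (v,v) \<notin> E" and aE: "a \<in> E" and bE: "b \<in> E" and tw: "twin E a b"
  shows "dbwE (E - {a}) = dbwE E"
proof (rule dbwE_transfer)
  have ab: "a \<noteq> b" using tw unfolding twin_def by simp
  then show "(E - {a} = {}) = (E = {})" using aE bE by blast
next
  fix N TE \<beta> assume "decE (E - {a}) N TE \<beta>"
  then show "\<exists>N' TE' \<beta>'. decE E N' TE' \<beta>' \<and> widE E N' TE' \<beta>' \<le> widE (E - {a}) N TE \<beta>"
    by (rule add_leaf[OF _ aE bE tw finE nl])
next
  fix N TE \<beta> assume d: "decE E N TE \<beta>"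
  have "E - {a} \<noteq> {}" using tw bE unfolding twin_def by blast
  then show "\<exists>N' TE' \<beta>'. decE (E - {a}) N' TE' \<beta>' \<and> widE (E - {a}) N' TE' \<beta>' \<le> widE E N TE \<beta>"
    by (rule delete_leaf[OF d aE])
qed

lemma twins_remove:
  assumes finE: "finite E" and nl: "\<forall>v. (v,v) \<notin> E" and RE: "R \<subseteq> E"
    and tw: "\<And>r E'. r \<in> R \<Longrightarrow> E - R \<subseteq> E' \<Longrightarrow> E' \<subseteq> E \<Longrightarrow> r \<in> E' \<Longrightarrow> \<exists>t\<in>E - R. twin E' r t"
  shows "dbwE (E - R) = dbwE E"
proof -
  have finR: "finite R" using finE RE by (rule rev_finite_subset)
  have "\<forall>F. F \<subseteq> R \<longrightarrow> dbwE (E - F) = dbwE E"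
  proof (intro allI impI)
    fix F assume "F \<subseteq> R"
    then have finF: "finite F" using finR by (rule finite_subset)
    show "dbwE (E - F) = dbwE E"
      using finF \<open>F \<subseteq> R\<close>
    proof (induction F rule: finite_induct)
      case empty then show ?case by simp
    next
      case (insert r F)
      have FR: "F \<subseteq> R" and rR: "r \<in> R" using insert.prems by simp_all
      let ?E' = "E - F"
      have rE': "r \<in> ?E'" using rR RE insert.hyps(2) by blast
      have sub1: "E - R \<subseteq> ?E'" using FR by blast
      obtain t where t: "t \<in> E - R" "twin ?E' r t" using tw[OF rR sub1 Diff_subset rE'] by blast
      have tE': "t \<in> ?E'" using t(1) sub1 by blast
      have fin': "finite ?E'" using finE by simp
      have nl': "\<forall>v. (v,v) \<notin> ?E'" using nl by simp
      have "dbwE (?E' - {r}) = dbwE ?E'" by (rule twin_dbw[OF fin' nl' rE' tE' t(2)])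
      moreover have "E - insert r F = ?E' - {r}" by blast
      ultimately show ?case using insert.IH[OF FR] by simp
    qed
  qed
  then show ?thesis using RE by simp
qed

lemma merge_dbw:
  fixes \<phi> :: "'a \<Rightarrow> 'a"
  assumes finE: "finite E" and nl: "\<forall>v. (v,v) \<notin> E" and RE: "R \<subseteq> E"
    and tw: "\<And>r E'. r \<in> R \<Longrightarrow> E - R \<subseteq> E' \<Longrightarrow> E' \<subseteq> E \<Longrightarrow> r \<in> E' \<Longrightarrow> \<exists>t\<in>E - R. twin E' r t"
    and img: "map_prod \<phi> \<phi> ` (E - R) = map_prod \<phi> \<phi> ` E"
    and inj: "inj_on (map_prod \<phi> \<phi>) (E - R)"
    and C: "\<And>v0 v1. v0 \<in> Range (E - R) \<Longrightarrow> v1 \<in> Domain (E - R) \<Longrightarrow> \<phi> v0 = \<phi> v1 \<Longrightarrow> v0 = v1"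
  shows "dbwE (map_prod \<phi> \<phi> ` E) = dbwE E"
proof -
  have "dbwE (map_prod \<phi> \<phi> ` (E - R)) = dbwE (E - R)" by (rule rename_dbw[OF inj C])
  also have "\<dots> = dbwE E" by (rule twins_remove[OF finE nl RE tw])
  finally show ?thesis unfolding img .
qed

definition mg :: "'a \<Rightarrow> 'a \<Rightarrow> 'a \<Rightarrow> 'a \<Rightarrow> 'a" where
  "mg x y g v = (if v = x \<or> v = y then g else v)"

lemma snd_identify:
  "snd (identify (V,E) x y g) = {(u,w). (u,w) \<in> E \<and> u \<notin> {x,y} \<and> w \<notin> {x,y}}
      \<union> {(u,g) | u. (u,x) \<in> E \<or> (u,y) \<in> E} \<union> {(g,w) | w. (x,w) \<in> E \<or> (y,w) \<in> E}"
  unfolding identify_def in_nbhd_def out_nbhd_def by auto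

lemma fst_identify: "fst (identify (V,E) x y g) = insert g (V - {x,y})"
  unfolding identify_def by simp

context
  fixes V :: "'a set" and E x y g
  assumes finV: "finite V" and sub: "E \<subseteq> V \<times> V" and nl: "\<forall>v. (v,v) \<notin> E"
    and xyV: "x \<in> V" "y \<in> V" "x \<noteq> y" and g: "g \<notin> V - {x,y}"
begin

lemma finE: "finite E" using finV sub by (meson finite_SigmaI rev_finite_subset)

lemma phi_eq: "v \<in> V \<Longrightarrow> w \<in> V \<Longrightarrow> v \<notin> {x,y} \<Longrightarrow> mg x y g w = mg x y g v \<Longrightarrow> w = v"
  unfolding mg_def using g by (auto split: if_splits)

lemma phi_id: "v \<notin> {x,y} \<Longrightarrow> mg x y g v = v" unfolding mg_def by simp

lemma phi_g: "v \<in> {x,y} \<Longrightarrow> mg x y g v = g" unfolding mg_def by auto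

lemma phiV: "v \<in> V \<Longrightarrow> mg x y g v \<in> insert g (V - {x,y})" unfolding mg_def by auto

lemma arcV: "(u,w) \<in> E \<Longrightarrow> u \<in> V \<and> w \<in> V" using sub by blast

lemma src_arcs:
  assumes hx: "x \<notin> Range E" "y \<notin> Range E"
  shows "snd (identify (V,E) x y g) = map_prod (mg x y g) (mg x y g) ` E"
proof
  let ?\<psi> = "map_prod (mg x y g) (mg x y g)"
  show "snd (identify (V,E) x y g) \<subseteq> ?\<psi> ` E"
  proof
    fix q assume "q \<in> snd (identify (V,E) x y g)"
    then consider (a) u w where "q = (u,w)" "(u,w) \<in> E" "u \<notin> {x,y}" "w \<notin> {x,y}"
      | (b) u where "q = (u,g)" "(u,x) \<in> E \<or> (u,y) \<in> E"
      | (c) w where "q = (g,w)" "(x,w) \<in> E \<or> (y,w) \<in> E"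
      unfolding snd_identify by blast
    then show "q \<in> ?\<psi> ` E"
    proof cases
      case a
      then have "q = ?\<psi> (u,w)" using phi_id by simp
      then show ?thesis using a(2) by blast
    next
      case b then show ?thesis using hx by blast
    next
      case c
      then obtain z where z: "z \<in> {x,y}" "(z,w) \<in> E" by blast
      have "w \<notin> {x,y}" using z(2) hx by blast
      then have "q = ?\<psi> (z,w)" using c(1) phi_id phi_g[OF z(1)] by simp
      then show ?thesis using z(2) by blast
    qed
  qed
  show "?\<psi> ` E \<subseteq> snd (identify (V,E) x y g)"
  proof
    fix q assume "q \<in> ?\<psi> ` E"
    then obtain pp where pp1: "q = ?\<psi> pp" and pp2: "pp \<in> E" by (rule imageE)
    note pp = pp2 pp1
    obtain u w where "pp = (u,w)" by (cases pp)
    then have uw: "(u,w) \<in> E" "q = ?\<psi> (u,w)" using pp by simp_all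
    have w: "w \<notin> {x,y}" using uw(1) hx by blast
    show "q \<in> snd (identify (V,E) x y g)"
    proof (cases "u \<in> {x,y}")
      case True
      then have "q = (g,w)" using uw(2) phi_g phi_id[OF w] by simp
      moreover have "(x,w) \<in> E \<or> (y,w) \<in> E" using True uw(1) by auto
      ultimately show ?thesis unfolding snd_identify by blast
    next
      case False
      then have "q = (u,w)" using uw(2) phi_id w by simp
      then show ?thesis unfolding snd_identify using uw(1) False w by blast
    qed
  qed
qed

lemma snk_arcs:
  assumes hx: "x \<notin> Domain E" "y \<notin> Domain E"
  shows "snd (identify (V,E) x y g) = map_prod (mg x y g) (mg x y g) ` E"
proof
  let ?\<psi> = "map_prod (mg x y g) (mg x y g)"
  show "snd (identify (V,E) x y g) \<subseteq> ?\<psi> ` E"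
  proof
    fix q assume "q \<in> snd (identify (V,E) x y g)"
    then consider (a) u w where "q = (u,w)" "(u,w) \<in> E" "u \<notin> {x,y}" "w \<notin> {x,y}"
      | (b) u where "q = (u,g)" "(u,x) \<in> E \<or> (u,y) \<in> E"
      | (c) w where "q = (g,w)" "(x,w) \<in> E \<or> (y,w) \<in> E"
      unfolding snd_identify by blast
    then show "q \<in> ?\<psi> ` E"
    proof cases
      case a
      then have "q = ?\<psi> (u,w)" using phi_id by simp
      then show ?thesis using a(2) by blast
    next
      case b
      then obtain z where z: "z \<in> {x,y}" "(u,z) \<in> E" by blast
      have "u \<notin> {x,y}" using z(2) hx by blast
      then have "q = ?\<psi> (u,z)" using b(1) phi_id phi_g[OF z(1)] by simp
      then show ?thesis using z(2) by blast
    next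
      case c then show ?thesis using hx by blast
    qed
  qed
  show "?\<psi> ` E \<subseteq> snd (identify (V,E) x y g)"
  proof
    fix q assume "q \<in> ?\<psi> ` E"
    then obtain pp where pp1: "q = ?\<psi> pp" and pp2: "pp \<in> E" by (rule imageE)
    note pp = pp2 pp1
    obtain u w where "pp = (u,w)" by (cases pp)
    then have uw: "(u,w) \<in> E" "q = ?\<psi> (u,w)" using pp by simp_all
    have u: "u \<notin> {x,y}" using uw(1) hx by blast
    show "q \<in> snd (identify (V,E) x y g)"
    proof (cases "w \<in> {x,y}")
      case True
      then have "q = (u,g)" using uw(2) phi_g phi_id[OF u] by simp
      moreover have "(u,x) \<in> E \<or> (u,y) \<in> E" using True uw(1) by auto
      ultimately show ?thesis unfolding snd_identify by blast
    next
      case False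
      then have "q = (u,w)" using uw(2) phi_id u by simp
      then show ?thesis unfolding snd_identify using uw(1) False u by blast
    qed
  qed
qed

lemma src_dbw:
  assumes hx: "x \<notin> Range E" "y \<notin> Range E"
  shows "dbwE (map_prod (mg x y g) (mg x y g) ` E) = dbwE E"
proof (rule merge_dbw[OF finE nl, where R = "{r\<in>E. fst r = y \<and> (x, snd r) \<in> E}"])
  let ?R = "{r\<in>E. fst r = y \<and> (x, snd r) \<in> E}"
  let ?\<psi> = "map_prod (mg x y g) (mg x y g)"
  show "?R \<subseteq> E" by blast
next
  let ?R = "{r\<in>E. fst r = y \<and> (x, snd r) \<in> E}"
  fix r E' assume r: "r \<in> ?R" and s1: "E - ?R \<subseteq> E'" and s2: "E' \<subseteq> E" and rE': "r \<in> E'"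
  obtain w where rw: "r = (y,w)" and xw: "(x,w) \<in> E" using r by (cases r) auto
  have t: "(x,w) \<in> E - ?R" using xw xyV(3) by simp
  have "Range E' \<subseteq> Range E" using s2 by blast
  then have "twin E' r (x,w)" unfolding twin_def using rw xyV(3) hx by auto
  then show "\<exists>t\<in>E - ?R. twin E' r t" using t by blast
next
  let ?R = "{r\<in>E. fst r = y \<and> (x, snd r) \<in> E}"
  let ?\<psi> = "map_prod (mg x y g) (mg x y g)"
  show "?\<psi> ` (E - ?R) = ?\<psi> ` E"
  proof
    show "?\<psi> ` (E - ?R) \<subseteq> ?\<psi> ` E" by (rule image_mono) blast
    show "?\<psi> ` E \<subseteq> ?\<psi> ` (E - ?R)"
    proof
      fix q assume "q \<in> ?\<psi> ` E"
      then obtain pp where pp1: "q = ?\<psi> pp" and pp2: "pp \<in> E" by (rule imageE)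
      obtain u w where uw: "pp = (u,w)" by (cases pp)
      show "q \<in> ?\<psi> ` (E - ?R)"
      proof (cases "pp \<in> ?R")
        case True
        then have u: "u = y" and xw: "(x,w) \<in> E" using uw by simp_all
        have "(x,w) \<in> E - ?R" using xw xyV(3) by simp
        moreover have "q = ?\<psi> (x,w)" using pp1 uw u phi_g[of x] phi_g[of y] by simp
        ultimately show ?thesis by (rule rev_image_eqI)
      next
        case False
        then have "pp \<in> E - ?R" using pp2 by simp
        then show ?thesis using pp1 by (rule rev_image_eqI) 
      qed
    qed
  qed
next
  let ?R = "{r\<in>E. fst r = y \<and> (x, snd r) \<in> E}"
  let ?\<psi> = "map_prod (mg x y g) (mg x y g)"
  show "inj_on ?\<psi> (E - ?R)"
  proof (rule inj_onI)
    fix a b assume a: "a \<in> E - ?R" and b: "b \<in> E - ?R" and ab: "?\<psi> a = ?\<psi> b"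
    obtain a1 a2 where aa: "a = (a1,a2)" by (cases a)
    obtain b1 b2 where bb: "b = (b1,b2)" by (cases b)
    have aE: "(a1,a2) \<in> E" and bE: "(b1,b2) \<in> E" using a b aa bb by simp_all
    have V: "a1 \<in> V" "a2 \<in> V" "b1 \<in> V" "b2 \<in> V" using arcV[OF aE] arcV[OF bE] by simp_all
    have a2: "a2 \<notin> {x,y}" using aE hx by blast
    have e1: "mg x y g a1 = mg x y g b1" and e2: "mg x y g a2 = mg x y g b2" using ab aa bb by simp_all
    have "b2 = a2" by (rule phi_eq[OF V(2) V(4) a2 e2[symmetric]])
    moreover have "b1 = a1"
    proof (cases "a1 \<in> {x,y}")
      case False
      then show ?thesis by (rule phi_eq[OF V(1) V(3) _ e1[symmetric]])
    next
      case True
      have b1: "b1 \<in> {x,y}"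
      proof (rule ccontr)
        assume "b1 \<notin> {x,y}"
        then have "a1 = b1" by (rule phi_eq[OF V(3) V(1) _ e1])
        then show False using True \<open>b1 \<notin> {x,y}\<close> by simp
      qed
      show ?thesis
      proof (rule ccontr)
        assume ne: "b1 \<noteq> a1"
        then have "(a1 = y \<and> b1 = x) \<or> (a1 = x \<and> b1 = y)" using True b1 by auto
        then show False
        proof
          assume h: "a1 = y \<and> b1 = x"
          then have "a \<in> ?R" using aE bE aa \<open>b2 = a2\<close> by simp
          then show False using a by simp
        next
          assume h: "a1 = x \<and> b1 = y"
          then have "b \<in> ?R" using aE bE bb \<open>b2 = a2\<close> by simp
          then show False using b by simp
        qed
      qed
    qed
    ultimately show "a = b" using aa bb by simp
  qed
next
  let ?R = "{r\<in>E. fst r = y \<and> (x, snd r) \<in> E}"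
  fix v0 v1 assume v0: "v0 \<in> Range (E - ?R)" and v1: "v1 \<in> Domain (E - ?R)" and e: "mg x y g v0 = mg x y g v1"
  have "v0 \<in> Range E" "v1 \<in> Domain E" using v0 v1 by blast+
  then have V: "v0 \<in> V" "v1 \<in> V" using sub by blast+
  have "v0 \<notin> {x,y}" using \<open>v0 \<in> Range E\<close> hx by blast
  then have "v1 = v0" by (rule phi_eq[OF V(1) V(2) _ e[symmetric]])
  then show "v0 = v1" by simp
qed

lemma snk_dbw:
  assumes hx: "x \<notin> Domain E" "y \<notin> Domain E"
  shows "dbwE (map_prod (mg x y g) (mg x y g) ` E) = dbwE E"
proof (rule merge_dbw[OF finE nl, where R = "{r\<in>E. snd r = y \<and> (fst r, x) \<in> E}"])
  let ?R = "{r\<in>E. snd r = y \<and> (fst r, x) \<in> E}"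
  show "?R \<subseteq> E" by blast
next
  let ?R = "{r\<in>E. snd r = y \<and> (fst r, x) \<in> E}"
  fix r E' assume r: "r \<in> ?R" and s1: "E - ?R \<subseteq> E'" and s2: "E' \<subseteq> E" and rE': "r \<in> E'"
  obtain u where rw: "r = (u,y)" and xw: "(u,x) \<in> E" using r by (cases r) auto
  have t: "(u,x) \<in> E - ?R" using xw xyV(3) by simp
  have "Domain E' \<subseteq> Domain E" using s2 by blast
  then have "twin E' r (u,x)" unfolding twin_def using rw xyV(3) hx by auto
  then show "\<exists>t\<in>E - ?R. twin E' r t" using t by blast
next
  let ?R = "{r\<in>E. snd r = y \<and> (fst r, x) \<in> E}"
  let ?\<psi> = "map_prod (mg x y g) (mg x y g)"
  show "?\<psi> ` (E - ?R) = ?\<psi> ` E"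
  proof
    show "?\<psi> ` (E - ?R) \<subseteq> ?\<psi> ` E" by (rule image_mono) blast
    show "?\<psi> ` E \<subseteq> ?\<psi> ` (E - ?R)"
    proof
      fix q assume "q \<in> ?\<psi> ` E"
      then obtain pp where pp1: "q = ?\<psi> pp" and pp2: "pp \<in> E" by (rule imageE)
      obtain u w where uw: "pp = (u,w)" by (cases pp)
      show "q \<in> ?\<psi> ` (E - ?R)"
      proof (cases "pp \<in> ?R")
        case True
        then have u: "w = y" and xw: "(u,x) \<in> E" using uw by simp_all
        have "(u,x) \<in> E - ?R" using xw xyV(3) by simp
        moreover have "q = ?\<psi> (u,x)" using pp1 uw u phi_g[of x] phi_g[of y] by simp
        ultimately show ?thesis by (rule rev_image_eqI)
      next
        case False
        then have "pp \<in> E - ?R" using pp2 by simp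
        then show ?thesis using pp1 by (rule rev_image_eqI)
      qed
    qed
  qed
next
  let ?R = "{r\<in>E. snd r = y \<and> (fst r, x) \<in> E}"
  let ?\<psi> = "map_prod (mg x y g) (mg x y g)"
  show "inj_on ?\<psi> (E - ?R)"
  proof (rule inj_onI)
    fix a b assume a: "a \<in> E - ?R" and b: "b \<in> E - ?R" and ab: "?\<psi> a = ?\<psi> b"
    obtain a1 a2 where aa: "a = (a1,a2)" by (cases a)
    obtain b1 b2 where bb: "b = (b1,b2)" by (cases b)
    have aE: "(a1,a2) \<in> E" and bE: "(b1,b2) \<in> E" using a b aa bb by simp_all
    have V: "a1 \<in> V" "a2 \<in> V" "b1 \<in> V" "b2 \<in> V" using arcV[OF aE] arcV[OF bE] by simp_all
    have a1: "a1 \<notin> {x,y}" using aE hx by blast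
    have e1: "mg x y g a1 = mg x y g b1" and e2: "mg x y g a2 = mg x y g b2" using ab aa bb by simp_all
    have "b1 = a1" by (rule phi_eq[OF V(1) V(3) a1 e1[symmetric]])
    moreover have "b2 = a2"
    proof (cases "a2 \<in> {x,y}")
      case False
      then show ?thesis by (rule phi_eq[OF V(2) V(4) _ e2[symmetric]])
    next
      case True
      have b2: "b2 \<in> {x,y}"
      proof (rule ccontr)
        assume "b2 \<notin> {x,y}"
        then have "a2 = b2" by (rule phi_eq[OF V(4) V(2) _ e2])
        then show False using True \<open>b2 \<notin> {x,y}\<close> by simp
      qed
      show ?thesis
      proof (rule ccontr)
        assume ne: "b2 \<noteq> a2"
        then have "(a2 = y \<and> b2 = x) \<or> (a2 = x \<and> b2 = y)" using True b2 by auto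
        then show False
        proof
          assume h: "a2 = y \<and> b2 = x"
          then have "a \<in> ?R" using aE bE aa \<open>b1 = a1\<close> by simp
          then show False using a by simp
        next
          assume h: "a2 = x \<and> b2 = y"
          then have "b \<in> ?R" using aE bE bb \<open>b1 = a1\<close> by simp
          then show False using b by simp
        qed
      qed
    qed
    ultimately show "a = b" using aa bb by simp
  qed
next
  let ?R = "{r\<in>E. snd r = y \<and> (fst r, x) \<in> E}"
  fix v0 v1 assume v0: "v0 \<in> Range (E - ?R)" and v1: "v1 \<in> Domain (E - ?R)" and e: "mg x y g v0 = mg x y g v1"
  have "v0 \<in> Range E" "v1 \<in> Domain E" using v0 v1 by blast+
  then have V: "v0 \<in> V" "v1 \<in> V" using sub by blast+
  have "v1 \<notin> {x,y}" using \<open>v1 \<in> Domain E\<close> hx by blast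
  then show "v0 = v1" by (rule phi_eq[OF V(2) V(1) _ e])
qed

lemma ident_digraph:
  assumes arcs: "snd (identify (V,E) x y g) = map_prod (mg x y g) (mg x y g) ` E"
    and noloop: "\<And>u w. (u,w) \<in> E \<Longrightarrow> mg x y g u \<noteq> mg x y g w"
  shows "digraph (identify (V,E) x y g)"
  unfolding digraph_def
proof (intro conjI allI)
  show "finite (fst (identify (V,E) x y g))" unfolding fst_identify using finV by simp
  show "snd (identify (V,E) x y g) \<subseteq> fst (identify (V,E) x y g) \<times> fst (identify (V,E) x y g)"
  proof
    fix q assume "q \<in> snd (identify (V,E) x y g)"
    then have "q \<in> map_prod (mg x y g) (mg x y g) ` E" unfolding arcs .
    then obtain pp where pp1: "q = map_prod (mg x y g) (mg x y g) pp" and pp2: "pp \<in> E" by (rule imageE)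
    obtain u w where uw: "pp = (u,w)" by (cases pp)
    have "u \<in> V" "w \<in> V" using arcV pp2 uw by auto
    then have h1: "mg x y g u \<in> insert g (V - {x,y})" and h2: "mg x y g w \<in> insert g (V - {x,y})"
      by (simp_all only: phiV)
    have "q = (mg x y g u, mg x y g w)" using pp1 uw by simp
    then show "q \<in> fst (identify (V,E) x y g) \<times> fst (identify (V,E) x y g)"
      unfolding fst_identify using h1 h2 by blast
  qed
  fix v
  show "(v,v) \<notin> snd (identify (V,E) x y g)"
  proof
    assume "(v,v) \<in> snd (identify (V,E) x y g)"
    then have "(v,v) \<in> map_prod (mg x y g) (mg x y g) ` E" unfolding arcs .
    then obtain pp where pp1: "(v,v) = map_prod (mg x y g) (mg x y g) pp" and pp2: "pp \<in> E" by (rule imageE)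
    obtain u w where uw: "pp = (u,w)" by (cases pp)
    have "mg x y g u = mg x y g w" using pp1 uw by (metis Pair_inject map_prod_simp)
    then show False using noloop pp2 uw by simp
  qed
qed

lemma src_noloop: "x \<notin> Range E \<Longrightarrow> y \<notin> Range E \<Longrightarrow> (u,w) \<in> E \<Longrightarrow> mg x y g u \<noteq> mg x y g w"
proof
  assume hx: "x \<notin> Range E" "y \<notin> Range E" and uw: "(u,w) \<in> E" and e: "mg x y g u = mg x y g w"
  have "w \<notin> {x,y}" using uw hx by blast
  then have "u = w" using phi_eq arcV[OF uw] e by blast
  then show False using uw nl by simp
qed

lemma snk_noloop: "x \<notin> Domain E \<Longrightarrow> y \<notin> Domain E \<Longrightarrow> (u,w) \<in> E \<Longrightarrow> mg x y g u \<noteq> mg x y g w"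
proof
  assume hx: "x \<notin> Domain E" "y \<notin> Domain E" and uw: "(u,w) \<in> E" and e: "mg x y g u = mg x y g w"
  have "u \<notin> {x,y}" using uw hx by blast
  then have "w = u" using phi_eq arcV[OF uw] e by metis
  then show False using uw nl by simp
qed

end


lemma step_dbw:
  assumes dg: "digraph D" and st: "ss_step D D'"
  shows "digraph D' \<and> dbw D' = dbw D"
proof -
  obtain x y g where id: "ss_identifiable D x y" and g: "g \<notin> fst D - {x,y}" and D': "D' = identify D x y g"
    using st unfolding ss_step_def by blast
  obtain V E where DVE: "D = (V,E)" by (cases D)
  have finV: "finite V" and sub: "E \<subseteq> V \<times> V" and nl: "\<forall>v. (v,v) \<notin> E"
    using dg DVE unfolding digraph_def by auto
  have xy: "x \<noteq> y" using id unfolding ss_identifiable_def by simp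
  have g': "g \<notin> V - {x,y}" using g DVE by simp
  have D'': "D' = identify (V,E) x y g" using D' DVE by simp
  have dD: "dbw D = dbwE E" using dbw_eq[of D] DVE by simp
  have dD': "dbw D' = dbwE (snd (identify (V,E) x y g))" using dbw_eq[of D'] D'' by simp
  from id have "(x \<in> V \<and> y \<in> V \<and> x \<notin> Range E \<and> y \<notin> Range E) \<or> (x \<in> V \<and> y \<in> V \<and> x \<notin> Domain E \<and> y \<notin> Domain E)"
    unfolding ss_identifiable_def is_source_def is_sink_def in_nbhd_def out_nbhd_def DVE by auto
  then show ?thesis
  proof
    assume h: "x \<in> V \<and> y \<in> V \<and> x \<notin> Range E \<and> y \<notin> Range E"
    then have h1: "x \<in> V" "y \<in> V" "x \<notin> Range E" "y \<notin> Range E" by simp_all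
    note arcs = src_arcs[OF finV sub nl h1(1,2) xy g' h1(3,4)]
    have "digraph (identify (V,E) x y g)"
      by (rule ident_digraph[OF finV sub nl h1(1,2) xy g' arcs src_noloop[OF finV sub nl h1(1,2) xy g' h1(3,4)]])
    moreover have "dbw D' = dbw D" unfolding dD dD' arcs by (rule src_dbw[OF finV sub nl h1(1,2) xy g' h1(3,4)])
    ultimately show ?thesis using D'' by simp
  next
    assume h: "x \<in> V \<and> y \<in> V \<and> x \<notin> Domain E \<and> y \<notin> Domain E"
    then have h1: "x \<in> V" "y \<in> V" "x \<notin> Domain E" "y \<notin> Domain E" by simp_all
    note arcs = snk_arcs[OF finV sub nl h1(1,2) xy g' h1(3,4)]
    have "digraph (identify (V,E) x y g)"
      by (rule ident_digraph[OF finV sub nl h1(1,2) xy g' arcs snk_noloop[OF finV sub nl h1(1,2) xy g' h1(3,4)]])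
    moreover have "dbw D' = dbw D" unfolding dD dD' arcs by (rule snk_dbw[OF finV sub nl h1(1,2) xy g' h1(3,4)])
    ultimately show ?thesis using D'' by simp
  qed
qed

theorem mainTheorem8:
  fixes D H :: "'a digraph"
  assumes "digraph D" and "digraph H"
    and "ss_equiv H D"
  shows "dbw H = dbw D"
proof -
  have r: "ss_step\<^sup>*\<^sup>* D H" using assms(3) unfolding ss_equiv_def .
  have "digraph D \<longrightarrow> digraph H \<and> dbw H = dbw D"
    using r
  proof (induction rule: rtranclp_induct)
    case base then show ?case by simp
  next
    case (step y z)
    show ?case
    proof
      assume "digraph D"
      then have "digraph y" "dbw y = dbw D" using step.IH by simp_all
      then show "digraph z \<and> dbw z = dbw D" using step_dbw[OF _ step.hyps(2)] by simp
    qed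
  qed
  then show ?thesis using assms(1) by simp
qed

end
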